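(* Assume (A1)–(A4), let $\{\lambda^k\}$ be generated by SLPMM with parameters $\sigma,\alpha>0$, and let $s>0$ be an integer. Then for all $k\ge0$, $$\mathbb E[\|\lambda^k\|]\le\psi(\sigma,\alpha,s),$$ and for every constant $0<\mu<1$, $$\Pr\big[\|\lambda^k\|\ge\phi(\sigma,\alpha,s,\mu)\big]\le\mu.$$
   Context: Let $\mathcal C\subset\mathbb R^n$ be a nonempty compact convex set. Let $\xi$ be a random vector whose distribution is supported on $\Xi\subseteq\mathbb R^q$, and let $F:\mathcal C\times\Xi\to\mathbb R$ and $G_i:\mathcal C\times\Xi\to\mathbb R$ ($i=1,\dots,p$) be such that $F(\cdot,\xi)$, $G_i(\cdot,\xi)$ are convex and continuous on $\mathcal C$ for every $\xi$, and $f(x):=\mathbb E[F(x,\xi)]$, $g_i(x):=\mathbb E[G_i(x,\xi)]$ are finite on $\mathcal C$. Write $G=(G_1,\dots,G_p)^T$. Stochastic subgradients: $v_0(x,\xi)\in\partial_xF(x,\xi)$, $v_i(x,\xi)\in\partial_xG_i(x,\xi)$. $[t]_+=\max\{t,0\}$, $[t]_+^2=(\max\{t,0\})^2$. SLPMM: fix $\sigma,\alpha>0$, $x^0\in\mathcal C$, $\lambda^0=0\in\mathbb R^p$, i.i.d. copies $\xi^0,\xi^1,\dots$ of $\xi$. For $k\ge0$, $x^{k+1}=\arg\min_{x\in\mathcal C}\{\mathcal L^k_\sigma(x,\lambda^k)+\frac{\alpha}{2}\|x-x^k\|^2\}$ with $\mathcal L^k_\sigma(x,\lambda):=F(x^k,\xi^k)+\langle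 v_0(x^k,\xi^k),x-x^k\rangle+\frac{1}{2\sigma}[\sum_{i=1}^p[\lambda_i+\sigma(G_i(x^k,\xi^k)+\langle v_i(x^k,\xi^k),x-x^k\rangle)]_+^2-\|\lambda\|^2]$, and $\lambda_i^{k+1}=[\lambda_i^k+\sigma(G_i(x^k,\xi^k)+\langle v_i(x^k,\xi^k),x^{k+1}-x^k\rangle)]_+$. Assumptions: (A1) $\|x'-x''\|\le R$ on $\mathcal C$. (A2) $\|G(x,\xi)\|\le\nu_g$ for all $x\in\mathcal C,\xi\in\Xi$. (A3) $\|v_0(x,\xi)\|\le\kappa_f$, $\|v_i(x,\xi)\|\le\kappa_g$ for all $x,\xi$. (A4) (Slater) there exist $\varepsilon_0>0$ and $\hat x\in\mathcal C$ with $g_i(\hat x)\le-\varepsilon_0$ for all $i$. Constants: $\beta_0:=\nu_g+\sqrt p\,\kappa_gR$, $\kappa_0:=\frac{2\kappa_fR}{\varepsilon_0}$, $\kappa_1:=\frac{R^2}{\varepsilon_0}$, $\kappa_2:=\frac{\nu_g^2}{\varepsilon_0}-\beta_0$, $\kappa_3:=2\beta_0+\frac{\varepsilon_0}{2}+\frac{8\beta_0^2}{\varepsilon_0}\log\frac{32\beta_0^2}{\varepsilon_0^2}$; $\psi(\sigma,\alpha,s):=\kappa_0+\kappa_1\frac{\alpha}{s}+\kappa_2\sigma+\kappa_3\sigma s$ and $\phi(\sigma,\alpha,s,\mu):=\psi(\sigma,\alpha,s)+\frac{8\beta_0^2}{\varepsilon_0}\log\big(\frac1\mu\big)\sigma s$.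 *)

theory Defs
  imports "HOL-Probability.Probability"
begin

definition subgrad_on :: "'n::euclidean_space set \<Rightarrow> ('n \<Rightarrow> real) \<Rightarrow> 'n \<Rightarrow> 'n \<Rightarrow> bool" where
  "subgrad_on C h x v \<longleftrightarrow> (\<forall>y\<in>C. h y \<ge> h x + inner v (y - x))"

definition slpmm_L ::
  "('n::euclidean_space \<Rightarrow> 'q \<Rightarrow> real) \<Rightarrow> ('n \<Rightarrow> 'q \<Rightarrow> real^'p) \<Rightarrow> ('n \<Rightarrow> 'q \<Rightarrow> 'n)
   \<Rightarrow> ('p \<Rightarrow> 'n \<Rightarrow> 'q \<Rightarrow> 'n) \<Rightarrow> real \<Rightarrow> 'n \<Rightarrow> 'q \<Rightarrow> 'n \<Rightarrow> real^'p \<Rightarrow> real" where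
  "slpmm_L F G v0 v \<sigma> xk z x lam =
     F xk z + inner (v0 xk z) (x - xk)
     + (1 / (2 * \<sigma>)) * ((\<Sum>i\<in>UNIV. (max 0 (lam $ i + \<sigma> * (G xk z $ i + inner (v i xk z) (x - xk))))\<^sup>2)
                         - (norm lam)\<^sup>2)"

text \<open>The proximal subproblem has a unique minimiser over C (strongly convex objective,
  C compact convex nonempty), selected here by SOME.\<close>
primrec slpmm ::
  "'n::euclidean_space set \<Rightarrow> ('n \<Rightarrow> 'q \<Rightarrow> real) \<Rightarrow> ('n \<Rightarrow> 'q \<Rightarrow> real^'p) \<Rightarrow> ('n \<Rightarrow> 'q \<Rightarrow> 'n)
   \<Rightarrow> ('p \<Rightarrow> 'n \<Rightarrow> 'q \<Rightarrow> 'n) \<Rightarrow> real \<Rightarrow> real \<Rightarrow> 'n \<Rightarrow> (nat \<Rightarrow> 'q) \<Rightarrow> nat \<Rightarrow> 'n \<times> (real^'p)" where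
  "slpmm C F G v0 v \<sigma> \<alpha> x0 smp 0 = (x0, 0)"
| "slpmm C F G v0 v \<sigma> \<alpha> x0 smp (Suc k) =
     (let xk = fst (slpmm C F G v0 v \<sigma> \<alpha> x0 smp k);
          lk = snd (slpmm C F G v0 v \<sigma> \<alpha> x0 smp k);
          z = smp k;
          Phi = (\<lambda>x. slpmm_L F G v0 v \<sigma> xk z x lk + (\<alpha> / 2) * (norm (x - xk))\<^sup>2);
          xn = (SOME y. y \<in> C \<and> (\<forall>w\<in>C. Phi y \<le> Phi w));
          ln = (\<chi> i. max 0 (lk $ i + \<sigma> * (G xk z $ i + inner (v i xk z) (xn - xk))))
      in (xn, ln))"

definition beta0 :: "real \<Rightarrow> real \<Rightarrow> real \<Rightarrow> nat \<Rightarrow> real" where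
  "beta0 \<nu>g \<kappa>g R p = \<nu>g + sqrt (real p) * \<kappa>g * R"

definition psi_bd :: "real \<Rightarrow> real \<Rightarrow> real \<Rightarrow> real \<Rightarrow> real \<Rightarrow> nat \<Rightarrow> real \<Rightarrow> real \<Rightarrow> real \<Rightarrow> real" where
  "psi_bd \<nu>g \<kappa>f \<kappa>g R \<epsilon>0 p \<sigma> \<alpha> s =
    (let b = beta0 \<nu>g \<kappa>g R p;
         k0 = 2 * \<kappa>f * R / \<epsilon>0;
         k1 = R\<^sup>2 / \<epsilon>0;
         k2 = \<nu>g\<^sup>2 / \<epsilon>0 - b;
         k3 = 2 * b + \<epsilon>0 / 2 + (8 * b\<^sup>2 / \<epsilon>0) * ln (32 * b\<^sup>2 / \<epsilon>0\<^sup>2)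
     in k0 + k1 * \<alpha> / s + k2 * \<sigma> + k3 * \<sigma> * s)"

definition phi_bd :: "real \<Rightarrow> real \<Rightarrow> real \<Rightarrow> real \<Rightarrow> real \<Rightarrow> nat \<Rightarrow> real \<Rightarrow> real \<Rightarrow> real \<Rightarrow> real \<Rightarrow> real" where
  "phi_bd \<nu>g \<kappa>f \<kappa>g R \<epsilon>0 p \<sigma> \<alpha> s \<mu> =
     psi_bd \<nu>g \<kappa>f \<kappa>g R \<epsilon>0 p \<sigma> \<alpha> s
     + (8 * (beta0 \<nu>g \<kappa>g R p)\<^sup>2 / \<epsilon>0) * ln (1 / \<mu>) * \<sigma> * s"

end

theory Submission
  imports Defs
begin


lemma maxsq_convex:
  fixes a b t :: real
  assumes "0 \<le> t" "t \<le> 1"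
  shows "(max 0 ((1-t)*a + t*b))\<^sup>2 \<le> (1-t)*(max 0 a)\<^sup>2 + t*(max 0 b)\<^sup>2"
proof -
  have "(1-t)*a \<le> (1-t)*max 0 a" "t*b \<le> t*max 0 b" "0 \<le> (1-t)*max 0 a" "0 \<le> t*max 0 b"
    using assms by (auto intro!: mult_left_mono)
  then have h1: "max 0 ((1-t)*a + t*b) \<le> (1-t)*max 0 a + t*max 0 b"
    by simp
  have h0: "0 \<le> max 0 ((1-t)*a + t*b)" by simp
  have "(max 0 ((1-t)*a + t*b))\<^sup>2 \<le> ((1-t)*max 0 a + t*max 0 b)\<^sup>2"
    using h1 h0 by (intro power_mono) auto
  also have "\<dots> = (1-t)*(max 0 a)\<^sup>2 + t*(max 0 b)\<^sup>2 - t*(1-t)*(max 0 a - max 0 b)\<^sup>2"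
    by (simp add: power2_eq_square algebra_simps)
  also have "\<dots> \<le> (1-t)*(max 0 a)\<^sup>2 + t*(max 0 b)\<^sup>2"
    using assms by simp
  finally show ?thesis .
qed

lemma norm_sq_comb:
  fixes u w :: "'a::real_inner"
  shows "(norm ((1-t) *\<^sub>R u + t *\<^sub>R w))\<^sup>2 = (1-t)*(norm u)\<^sup>2 + t*(norm w)\<^sup>2 - t*(1-t)*(norm (u - w))\<^sup>2"
  by (simp add: power2_norm_eq_inner inner_add_left inner_add_right inner_diff_left inner_diff_right
      inner_commute algebra_simps)

definition Psi :: "real \<Rightarrow> real \<Rightarrow> ('n::euclidean_space \<times> (real^'p) \<times> 'n \<times> (real^'p) \<times> ('n^'p)) \<Rightarrow> 'n \<Rightarrow> real" where
  "Psi \<sigma> \<alpha> th y = (case th of (xk, l, a, b, e) \<Rightarrow>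
     inner a (y - xk) + (1/(2*\<sigma>)) * (\<Sum>i\<in>UNIV. (max 0 (l$i + \<sigma>*(b$i + inner (e$i) (y - xk))))\<^sup>2)
     + (\<alpha>/2) * (norm (y - xk))\<^sup>2)"

lemma Psi_strong:
  assumes "\<sigma> > 0" "0 \<le> t" "t \<le> 1"
  shows "Psi \<sigma> \<alpha> th ((1-t) *\<^sub>R y + t *\<^sub>R w) \<le> (1-t) * Psi \<sigma> \<alpha> th y + t * Psi \<sigma> \<alpha> th w
           - (\<alpha>/2) * (t*(1-t)) * (norm (y - w))\<^sup>2"
proof -
  obtain xk l a b e where th: "th = (xk, l, a, b, e)" by (cases th) auto
  have lin: "inner a ((1-t) *\<^sub>R y + t *\<^sub>R w - xk) = (1-t) * inner a (y - xk) + t * inner a (w - xk)" for a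
    by (simp add: inner_diff_right inner_add_right algebra_simps)
  have eq1: "l$i + \<sigma>*(b$i + inner (e$i) ((1-t) *\<^sub>R y + t *\<^sub>R w - xk))
       = (1-t)*(l$i + \<sigma>*(b$i + inner (e$i) (y - xk))) + t*(l$i + \<sigma>*(b$i + inner (e$i) (w - xk)))" for i
    by (simp add: lin algebra_simps)
  define A1 where "A1 = (\<Sum>i\<in>UNIV. (max 0 (l$i + \<sigma>*(b$i + inner (e$i) (y - xk))))\<^sup>2)"
  define A2 where "A2 = (\<Sum>i\<in>UNIV. (max 0 (l$i + \<sigma>*(b$i + inner (e$i) (w - xk))))\<^sup>2)"
  define Sm where "Sm = (\<Sum>i\<in>UNIV. (max 0 (l$i + \<sigma>*(b$i + inner (e$i) ((1-t) *\<^sub>R y + t *\<^sub>R w - xk))))\<^sup>2)"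
  have S: "Sm \<le> (1-t) * A1 + t * A2"
    unfolding A1_def A2_def Sm_def eq1 sum_distrib_left sum.distrib[symmetric]
    by (intro sum_mono maxsq_convex assms)
  have N: "(norm ((1-t) *\<^sub>R y + t *\<^sub>R w - xk))\<^sup>2 = (1-t)*(norm (y-xk))\<^sup>2 + t*(norm (w-xk))\<^sup>2 - t*(1-t)*(norm (y - w))\<^sup>2"
  proof -
    have "(1-t) *\<^sub>R y + t *\<^sub>R w - xk = (1-t) *\<^sub>R (y - xk) + t *\<^sub>R (w - xk)"
      by (simp add: algebra_simps)
    then show ?thesis using norm_sq_comb[of t "y - xk" "w - xk"] by simp
  qed
  have c: "0 \<le> 1/(2*\<sigma>)" using assms by simp
  have S': "(1/(2*\<sigma>))*Sm \<le> (1-t)*((1/(2*\<sigma>))*A1) + t*((1/(2*\<sigma>))*A2)"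
    using mult_left_mono[OF S c] assms(1) by (simp add: field_simps)
  have key: "Psi \<sigma> \<alpha> th ((1-t) *\<^sub>R y + t *\<^sub>R w) - ((1-t) * Psi \<sigma> \<alpha> th y + t * Psi \<sigma> \<alpha> th w
           - (\<alpha>/2) * (t*(1-t)) * (norm (y - w))\<^sup>2) = (1/(2*\<sigma>))*Sm - ((1-t)*((1/(2*\<sigma>))*A1) + t*((1/(2*\<sigma>))*A2))"
    unfolding th Psi_def prod.case lin N A1_def A2_def Sm_def by (simp add: algebra_simps) (simp add: field_simps)
  show ?thesis using key S' by linarith
qed

lemma Psi_alt: "Psi \<sigma> \<alpha> th y = inner (fst (snd (snd th))) (y - fst th)
   + (1/(2*\<sigma>)) * (\<Sum>i\<in>UNIV. (max 0 (fst (snd th) $ i + \<sigma>*(fst (snd (snd (snd th))) $ i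
        + inner (snd (snd (snd (snd th))) $ i) (y - fst th))))\<^sup>2)
   + (\<alpha>/2) * (norm (y - fst th))\<^sup>2"
  by (cases th) (auto simp: Psi_def)

lemma Psi_cont: "continuous_on UNIV (\<lambda>p. Psi \<sigma> \<alpha> (fst p) (snd p))"
  unfolding Psi_alt
  by (intro continuous_on_add continuous_on_mult continuous_on_const continuous_on_sum continuous_on_power
     continuous_on_max continuous_on_inner continuous_on_diff continuous_on_fst continuous_on_snd continuous_on_id
     continuous_on_component continuous_on_norm)

lemma le_of_eps:
  fixes a b c :: real
  assumes "\<And>t. 0 < t \<Longrightarrow> t < 1 \<Longrightarrow> a \<le> b + c * t"
  shows "a \<le> b"
proof (rule ccontr)
  assume "\<not> a \<le> b"
  then have ab: "a > b" by simp
  show False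
  proof (cases "c \<le> 0")
    case True
    then have "a \<le> b + c * (1/2)" using assms[of "1/2"] by simp
    then show False using True ab by linarith
  next
    case False
    define t where "t = min (1/2) ((a-b)/(2*c))"
    have t0: "0 < t" "t < 1" using ab False by (auto simp: t_def)
    have "c * t \<le> c * ((a-b)/(2*c))" using False by (intro mult_left_mono) (auto simp: t_def)
    also have "\<dots> = (a - b)/2" using False by simp
    finally have ct: "c * t \<le> (a - b)/2" .
    have "(a-b)/2 < a - b" using ab by simp
    then have "b + c * t < a" using ct by linarith
    then show False using assms[OF t0] by linarith
  qed
qed

definition amin :: "'n::euclidean_space set \<Rightarrow> real \<Rightarrow> real \<Rightarrow> ('n \<times> (real^'p) \<times> 'n \<times> (real^'p) \<times> ('n^'p)) \<Rightarrow> 'n" where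
  "amin C \<sigma> \<alpha> th = (SOME y. y \<in> C \<and> (\<forall>w\<in>C. Psi \<sigma> \<alpha> th y \<le> Psi \<sigma> \<alpha> th w))"

locale amin_loc =
  fixes C :: "'n::euclidean_space set" and \<sigma> \<alpha> :: real
  assumes cpt: "compact C" and cvx: "convex C" and ne: "C \<noteq> {}" and sp: "\<sigma> > 0" and ap: "\<alpha> > 0"
begin

lemma ex_min: "\<exists>y. y \<in> C \<and> (\<forall>w\<in>C. Psi \<sigma> \<alpha> th y \<le> Psi \<sigma> \<alpha> th w)"
proof -
  have c: "continuous_on C (\<lambda>y. (th,y))" by (intro continuous_intros)
  have "continuous_on C (\<lambda>y. Psi \<sigma> \<alpha> (fst (th,y)) (snd (th,y)))"
    by (rule continuous_on_compose2[OF Psi_cont c]) auto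
  then have "continuous_on C (Psi \<sigma> \<alpha> th)" by simp
  from continuous_attains_inf[OF cpt ne this] show ?thesis by auto
qed

lemma amin_min: "amin C \<sigma> \<alpha> th \<in> C" "\<And>w. w \<in> C \<Longrightarrow> Psi \<sigma> \<alpha> th (amin C \<sigma> \<alpha> th) \<le> Psi \<sigma> \<alpha> th w"
  using someI_ex[OF ex_min[of th]] unfolding amin_def by auto

lemma three_point:
  assumes y: "y \<in> C" "\<And>u. u \<in> C \<Longrightarrow> Psi \<sigma> \<alpha> th y \<le> Psi \<sigma> \<alpha> th u" and w: "w \<in> C"
  shows "Psi \<sigma> \<alpha> th y + (\<alpha>/2) * (norm (y - w))\<^sup>2 \<le> Psi \<sigma> \<alpha> th w"
proof -
  have "Psi \<sigma> \<alpha> th y \<le> (Psi \<sigma> \<alpha> th w - (\<alpha>/2) * (norm (y - w))\<^sup>2) + ((\<alpha>/2) * (norm (y - w))\<^sup>2) * t"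
    if t: "0 < t" "t < 1" for t
  proof -
    have mem: "(1-t) *\<^sub>R y + t *\<^sub>R w \<in> C"
      by (rule convexD[OF cvx y(1) w]) (use t in auto)
    have "Psi \<sigma> \<alpha> th y \<le> Psi \<sigma> \<alpha> th ((1-t) *\<^sub>R y + t *\<^sub>R w)" using y(2)[OF mem] .
    also have "\<dots> \<le> (1-t) * Psi \<sigma> \<alpha> th y + t * Psi \<sigma> \<alpha> th w - (\<alpha>/2) * (t*(1-t)) * (norm (y - w))\<^sup>2"
      using Psi_strong[OF sp, where t=t and \<alpha>=\<alpha> and th=th and y=y and w=w] t by simp
    finally have "t * Psi \<sigma> \<alpha> th y \<le> t * (Psi \<sigma> \<alpha> th w - (\<alpha>/2) * (1-t) * (norm (y - w))\<^sup>2)"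
      by (simp add: algebra_simps)
    then have h: "Psi \<sigma> \<alpha> th y \<le> Psi \<sigma> \<alpha> th w - (\<alpha>/2) * (1-t) * (norm (y - w))\<^sup>2"
      using t by simp
    have "(\<alpha>/2) * (1-t) * (norm (y - w))\<^sup>2 = (\<alpha>/2) * (norm (y - w))\<^sup>2 - ((\<alpha>/2) * (norm (y - w))\<^sup>2) * t"
      by (simp add: field_simps)
    then show ?thesis using h by linarith
  qed
  then have "Psi \<sigma> \<alpha> th y \<le> Psi \<sigma> \<alpha> th w - (\<alpha>/2) * (norm (y - w))\<^sup>2"
    by (rule le_of_eps[where c = "(\<alpha>/2) * (norm (y - w))\<^sup>2"])
  then show ?thesis by simp
qed

lemma min_unique:
  assumes "y1 \<in> C" "\<And>u. u \<in> C \<Longrightarrow> Psi \<sigma> \<alpha> th y1 \<le> Psi \<sigma> \<alpha> th u"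
     and "y2 \<in> C" "\<And>u. u \<in> C \<Longrightarrow> Psi \<sigma> \<alpha> th y2 \<le> Psi \<sigma> \<alpha> th u"
  shows "y1 = y2"
proof -
  have "Psi \<sigma> \<alpha> th y1 + (\<alpha>/2) * (norm (y1 - y2))\<^sup>2 \<le> Psi \<sigma> \<alpha> th y2"
    using three_point[OF assms(1,2) assms(3)] .
  moreover have "Psi \<sigma> \<alpha> th y2 \<le> Psi \<sigma> \<alpha> th y1" using assms(4)[OF assms(1)] .
  ultimately have "(\<alpha>/2) * (norm (y1 - y2))\<^sup>2 \<le> 0" by linarith
  then have "(norm (y1 - y2))\<^sup>2 \<le> 0" using ap by (simp add: mult_le_0_iff)
  then show ?thesis by simp
qed

lemma amin_cont: "continuous_on UNIV (amin C \<sigma> \<alpha>)"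
proof (rule continuous_from_closed_graph[OF cpt])
  show "amin C \<sigma> \<alpha> \<in> UNIV \<rightarrow> C" using amin_min by auto
  have eq: "(\<lambda>x. (x, amin C \<sigma> \<alpha> x)) ` UNIV =
      (UNIV \<times> C) \<inter> (\<Inter>w\<in>C. {p. Psi \<sigma> \<alpha> (fst p) (snd p) \<le> Psi \<sigma> \<alpha> (fst p) w})"
  proof (intro set_eqI iffI)
    fix p assume "p \<in> (\<lambda>x. (x, amin C \<sigma> \<alpha> x)) ` UNIV"
    then obtain th where "p = (th, amin C \<sigma> \<alpha> th)" by blast
    then show "p \<in> (UNIV \<times> C) \<inter> (\<Inter>w\<in>C. {p. Psi \<sigma> \<alpha> (fst p) (snd p) \<le> Psi \<sigma> \<alpha> (fst p) w})"
      using amin_min(1)[of th] amin_min(2)[of _ th] by auto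
  next
    fix p assume p: "p \<in> (UNIV \<times> C) \<inter> (\<Inter>w\<in>C. {p. Psi \<sigma> \<alpha> (fst p) (snd p) \<le> Psi \<sigma> \<alpha> (fst p) w})"
    obtain th y where pe: "p = (th, y)" by (cases p)
    have "y \<in> C" "\<And>u. u \<in> C \<Longrightarrow> Psi \<sigma> \<alpha> th y \<le> Psi \<sigma> \<alpha> th u" using p pe by auto
    then have "y = amin C \<sigma> \<alpha> th" using min_unique[of y th "amin C \<sigma> \<alpha> th"] amin_min(1)[of th] amin_min(2)[of _ th] by blast
    then show "p \<in> (\<lambda>x. (x, amin C \<sigma> \<alpha> x)) ` UNIV" using pe by simp
  qed
  have c2: "continuous_on UNIV (\<lambda>p. Psi \<sigma> \<alpha> (fst p) w)" for w
    unfolding Psi_alt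
    by (intro continuous_on_add continuous_on_mult continuous_on_const continuous_on_sum continuous_on_power
     continuous_on_max continuous_on_inner continuous_on_diff continuous_on_fst continuous_on_snd continuous_on_id
     continuous_on_component continuous_on_norm)
  show "closed ((\<lambda>x. (x, amin C \<sigma> \<alpha> x)) ` UNIV)"
    unfolding eq
    by (intro closed_Int closed_Times closed_INT closed_UNIV compact_imp_closed[OF cpt] ballI closed_Collect_le Psi_cont c2)
qed

end



lemma maxsq_le: "(u::real) \<le> w \<Longrightarrow> (max 0 u)\<^sup>2 \<le> w\<^sup>2"
  by (cases "u \<le> 0") (auto intro: power_mono simp: max_def)

lemma norm_sq_vec: "(norm (x::real^'p))\<^sup>2 = (\<Sum>i\<in>UNIV. (x$i)\<^sup>2)"
  unfolding power2_norm_eq_inner inner_vec_def by (simp add: power2_eq_square)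

lemma norm_vec_bound:
  fixes x :: "real^'p"
  assumes "\<And>i. \<bar>x$i\<bar> \<le> c"
  shows "norm x \<le> sqrt (real CARD('p)) * c"
proof -
  have c0: "0 \<le> c" using assms[of undefined] by linarith
  have "(norm x)\<^sup>2 \<le> (\<Sum>i\<in>(UNIV::'p set). c\<^sup>2)"
    unfolding norm_sq_vec
    by (intro sum_mono) (metis abs_le_square_iff abs_of_nonneg assms c0 power2_abs)
  also have "\<dots> = (sqrt (real CARD('p)) * c)\<^sup>2" by (simp add: power_mult_distrib)
  finally show ?thesis
    by (rule power2_le_imp_le) (use c0 in simp)
qed

locale slp = amin_loc C \<sigma> \<alpha>
  for C :: "'n::euclidean_space set" and \<sigma> \<alpha> :: real +
  fixes F :: "'n \<Rightarrow> 'q \<Rightarrow> real"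
    and G :: "'n \<Rightarrow> 'q \<Rightarrow> real^'p"
    and v0 :: "'n \<Rightarrow> 'q \<Rightarrow> 'n"
    and v :: "'p \<Rightarrow> 'n \<Rightarrow> 'q \<Rightarrow> 'n"
    and Xset :: "'q set"
    and R \<nu>g \<kappa>f \<kappa>g :: real and xhat :: 'n
  assumes v_sub: "\<And>x z i. x \<in> C \<Longrightarrow> z \<in> Xset \<Longrightarrow> subgrad_on C (\<lambda>y. G y z $ i) x (v i x z)"
    and A1: "\<And>x' x''. x' \<in> C \<Longrightarrow> x'' \<in> C \<Longrightarrow> norm (x' - x'') \<le> R"
    and A2: "\<And>x z. x \<in> C \<Longrightarrow> z \<in> Xset \<Longrightarrow> norm (G x z) \<le> \<nu>g"
    and A3: "\<And>x z i. x \<in> C \<Longrightarrow> z \<in> Xset \<Longrightarrow> norm (v0 x z) \<le> \<kappa>f \<and> norm (v i x z) \<le> \<kappa>g"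
    and xhat: "xhat \<in> C"
begin

definition prm :: "'n \<times> (real^'p) \<Rightarrow> 'q \<Rightarrow> 'n \<times> (real^'p) \<times> 'n \<times> (real^'p) \<times> ('n^'p)" where
  "prm y z = (fst y, snd y, v0 (fst y) z, G (fst y) z, \<chi> i. v i (fst y) z)"

definition step :: "'n \<times> (real^'p) \<Rightarrow> 'q \<Rightarrow> 'n \<times> (real^'p)" where
  "step y z = (let xk = fst y;
          lk = snd y;
          Phi = (\<lambda>x. slpmm_L F G v0 v \<sigma> xk z x lk + (\<alpha> / 2) * (norm (x - xk))\<^sup>2);
          xn = (SOME y. y \<in> C \<and> (\<forall>w\<in>C. Phi y \<le> Phi w));
          ln = (\<chi> i. max 0 (lk $ i + \<sigma> * (G xk z $ i + inner (v i xk z) (xn - xk))))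
      in (xn, ln))"

lemma slpmm_Suc: "slpmm C F G v0 v \<sigma> \<alpha> x0 smp (Suc k) = step (slpmm C F G v0 v \<sigma> \<alpha> x0 smp k) (smp k)"
  by (simp add: step_def Let_def)

definition bet :: real where "bet = \<nu>g + sqrt (real CARD('p)) * \<kappa>g * R"

lemma Phi_eq: "slpmm_L F G v0 v \<sigma> (fst y) z x (snd y) + (\<alpha> / 2) * (norm (x - fst y))\<^sup>2
   = Psi \<sigma> \<alpha> (prm y z) x + (F (fst y) z - (1/(2*\<sigma>)) * (norm (snd y))\<^sup>2)"
  unfolding slpmm_L_def Psi_def prm_def by (simp add: algebra_simps)

lemma step_fst: "fst (step y z) = amin C \<sigma> \<alpha> (prm y z)"
proof -
  have "(\<lambda>u. u \<in> C \<and> (\<forall>w\<in>C. slpmm_L F G v0 v \<sigma> (fst y) z u (snd y) + (\<alpha> / 2) * (norm (u - fst y))\<^sup>2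
        \<le> slpmm_L F G v0 v \<sigma> (fst y) z w (snd y) + (\<alpha> / 2) * (norm (w - fst y))\<^sup>2))
      = (\<lambda>u. u \<in> C \<and> (\<forall>w\<in>C. Psi \<sigma> \<alpha> (prm y z) u \<le> Psi \<sigma> \<alpha> (prm y z) w))"
    unfolding Phi_eq by simp
  then show ?thesis unfolding step_def amin_def Let_def by simp
qed

lemma step_snd: "snd (step y z) = (\<chi> i. max 0 (snd y $ i + \<sigma> * (G (fst y) z $ i + inner (v i (fst y) z) (fst (step y z) - fst y))))"
  unfolding step_def Let_def by simp

lemma step_C: "fst (step y z) \<in> C"
  unfolding step_fst by (rule amin_min)

lemma step_nonneg: "0 \<le> snd (step y z) $ i"
  unfolding step_snd[of y z] by simp

lemma step_incr:
  assumes y: "fst y \<in> C" "\<And>i. 0 \<le> snd y $ i" and z: "z \<in> Xset"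
  shows "norm (snd (step y z) - snd y) \<le> \<sigma> * bet"
proof -
  let ?xk = "fst y" and ?xn = "fst (step y z)"
  define a where "a = (\<chi> i. G ?xk z $ i + inner (v i ?xk z) (?xn - ?xk))"
  have "norm (snd (step y z) - snd y) \<le> norm (\<sigma> *\<^sub>R a)"
  proof (rule norm_le_componentwise_cart)
    fix i
    have "\<bar>max 0 (snd y $ i + \<sigma> * a $ i) - snd y $ i\<bar> \<le> \<bar>\<sigma> * a $ i\<bar>"
      using y(2)[of i] by (auto simp: max_def)
    then show "norm ((snd (step y z) - snd y) $ i) \<le> norm ((\<sigma> *\<^sub>R a) $ i)"
      by (subst step_snd) (simp add: a_def)
  qed
  also have "\<dots> = \<sigma> * norm a" using sp by simp
  also have "norm a \<le> bet"
  proof -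
    have "norm a \<le> norm (G ?xk z) + norm (\<chi> i. inner (v i ?xk z) (?xn - ?xk))"
    proof -
      have "a = G ?xk z + (\<chi> i. inner (v i ?xk z) (?xn - ?xk))" unfolding a_def by (simp add: vec_eq_iff)
      then show ?thesis using norm_triangle_ineq by metis
    qed
    also have "norm (G ?xk z) \<le> \<nu>g" using A2 y z by blast
    also have "norm (\<chi> i. inner (v i ?xk z) (?xn - ?xk)) \<le> sqrt (real CARD('p)) * (\<kappa>g * R)"
    proof (rule norm_vec_bound)
      fix i
      have "\<bar>inner (v i ?xk z) (?xn - ?xk)\<bar> \<le> norm (v i ?xk z) * norm (?xn - ?xk)"
        by (rule Cauchy_Schwarz_ineq2)
      also have "\<dots> \<le> \<kappa>g * R"
      proof -
        have a: "norm (v i ?xk z) \<le> \<kappa>g" using A3[OF y(1) z, of i] by simp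
        have b: "norm (?xn - ?xk) \<le> R" using A1[OF step_C y(1)] by simp
        show ?thesis by (rule mult_mono[OF a b]) (auto intro: order_trans[OF norm_ge_zero a])
      qed
      finally show "\<bar>(\<chi> i. inner (v i ?xk z) (?xn - ?xk)) $ i\<bar> \<le> \<kappa>g * R" by simp
    qed
    finally show ?thesis by (simp add: bet_def mult.assoc)
  qed
  then have "\<sigma> * norm a \<le> \<sigma> * bet" using sp by simp
  finally show ?thesis .
qed

definition V :: "'n \<times> (real^'p) \<Rightarrow> real" where
  "V y = (norm (snd y))\<^sup>2 + \<alpha> * \<sigma> * (norm (xhat - fst y))\<^sup>2"

lemma step_V:
  assumes y: "fst y \<in> C" and z: "z \<in> Xset"
  shows "V (step y z) \<le> V y + 2 * \<sigma> * inner (snd y) (G xhat z) + \<sigma>\<^sup>2 * \<nu>g\<^sup>2 + 2 * \<sigma> * \<kappa>f * R"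
proof -
  let ?xk = "fst y" and ?xn = "fst (step y z)" and ?l = "snd y" and ?l' = "snd (step y z)"
  let ?th = "prm y z"
  have tp: "Psi \<sigma> \<alpha> ?th ?xn + (\<alpha>/2) * (norm (?xn - xhat))\<^sup>2 \<le> Psi \<sigma> \<alpha> ?th xhat"
    unfolding step_fst by (intro three_point amin_min xhat)
  have sumeq: "(\<Sum>i\<in>UNIV. (max 0 (?l$i + \<sigma>*(G ?xk z $i + inner (v i ?xk z) (?xn - ?xk))))\<^sup>2) = (norm ?l')\<^sup>2"
  proof -
    have "snd (step y z) $ i = max 0 (?l$i + \<sigma>*(G ?xk z $i + inner (v i ?xk z) (?xn - ?xk)))" for i
      by (subst step_snd) simp
    then show ?thesis unfolding norm_sq_vec by simp
  qed
  have P1: "Psi \<sigma> \<alpha> ?th ?xn = inner (v0 ?xk z) (?xn - ?xk) + (1/(2*\<sigma>)) * (norm ?l')\<^sup>2 + (\<alpha>/2) * (norm (?xn - ?xk))\<^sup>2"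
    unfolding Psi_def prm_def using sumeq by simp
  have sub: "G ?xk z $ i + inner (v i ?xk z) (xhat - ?xk) \<le> G xhat z $ i" for i
    using v_sub[OF y z, of i] xhat unfolding subgrad_on_def by auto
  have "(\<Sum>i\<in>UNIV. (max 0 (?l$i + \<sigma>*(G ?xk z $i + inner (v i ?xk z) (xhat - ?xk))))\<^sup>2)
      \<le> (\<Sum>i\<in>UNIV. (?l$i + \<sigma> * G xhat z $ i)\<^sup>2)"
    by (intro sum_mono maxsq_le) (use sub sp in \<open>auto intro: mult_left_mono\<close>)
  also have "\<dots> = (norm ?l)\<^sup>2 + 2 * \<sigma> * inner ?l (G xhat z) + \<sigma>\<^sup>2 * (norm (G xhat z))\<^sup>2"
    unfolding norm_sq_vec inner_vec_def
    by (simp add: power2_eq_square algebra_simps sum.distrib sum_distrib_left)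
  also have "\<dots> \<le> (norm ?l)\<^sup>2 + 2 * \<sigma> * inner ?l (G xhat z) + \<sigma>\<^sup>2 * \<nu>g\<^sup>2"
  proof -
    have "norm (G xhat z) \<le> \<nu>g" using A2[OF xhat z] .
    then have "(norm (G xhat z))\<^sup>2 \<le> \<nu>g\<^sup>2" by (intro power_mono) auto
    then show ?thesis by (simp add: mult_left_mono)
  qed
  finally have S: "(\<Sum>i\<in>UNIV. (max 0 (?l$i + \<sigma>*(G ?xk z $i + inner (v i ?xk z) (xhat - ?xk))))\<^sup>2)
      \<le> (norm ?l)\<^sup>2 + 2 * \<sigma> * inner ?l (G xhat z) + \<sigma>\<^sup>2 * \<nu>g\<^sup>2" .
  have P2: "Psi \<sigma> \<alpha> ?th xhat \<le> inner (v0 ?xk z) (xhat - ?xk)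
      + (1/(2*\<sigma>)) * ((norm ?l)\<^sup>2 + 2 * \<sigma> * inner ?l (G xhat z) + \<sigma>\<^sup>2 * \<nu>g\<^sup>2) + (\<alpha>/2) * (norm (xhat - ?xk))\<^sup>2"
    unfolding Psi_def prm_def using mult_left_mono[OF S, of "1/(2*\<sigma>)"] sp by simp
  have inn: "inner (v0 ?xk z) (xhat - ?xn) \<le> \<kappa>f * R"
  proof -
    have "inner (v0 ?xk z) (xhat - ?xn) \<le> norm (v0 ?xk z) * norm (xhat - ?xn)"
      using Cauchy_Schwarz_ineq2 by (metis abs_le_D1)
    also have "\<dots> \<le> \<kappa>f * R"
    proof -
      have a: "norm (v0 ?xk z) \<le> \<kappa>f" using A3[OF y z] by blast
      have b: "norm (xhat - ?xn) \<le> R" using A1[OF xhat step_C] by simp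
      show ?thesis by (rule mult_mono[OF a b]) (auto intro: order_trans[OF norm_ge_zero a])
    qed
    finally show ?thesis .
  qed
  have lin: "inner (v0 ?xk z) (xhat - ?xk) - inner (v0 ?xk z) (?xn - ?xk) = inner (v0 ?xk z) (xhat - ?xn)"
    by (simp add: inner_diff_right)
  have nn: "0 \<le> (\<alpha>/2) * (norm (?xn - ?xk))\<^sup>2" using ap by simp
  have nc: "(norm (?xn - xhat))\<^sup>2 = (norm (xhat - ?xn))\<^sup>2" by (simp add: norm_minus_commute)
  have main: "(1/(2*\<sigma>)) * (norm ?l')\<^sup>2 + (\<alpha>/2) * (norm (xhat - ?xn))\<^sup>2 \<le>
     \<kappa>f * R + (1/(2*\<sigma>)) * ((norm ?l)\<^sup>2 + 2 * \<sigma> * inner ?l (G xhat z) + \<sigma>\<^sup>2 * \<nu>g\<^sup>2) + (\<alpha>/2) * (norm (xhat - ?xk))\<^sup>2"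
  proof -
    define Q1 where "Q1 = (1/(2*\<sigma>)) * (norm ?l')\<^sup>2"
    define Q2 where "Q2 = (1/(2*\<sigma>)) * ((norm ?l)\<^sup>2 + 2 * \<sigma> * inner ?l (G xhat z) + \<sigma>\<^sup>2 * \<nu>g\<^sup>2)"
    define N1 where "N1 = (\<alpha>/2) * (norm (xhat - ?xn))\<^sup>2"
    define N2 where "N2 = (\<alpha>/2) * (norm (?xn - ?xk))\<^sup>2"
    define N3 where "N3 = (\<alpha>/2) * (norm (xhat - ?xk))\<^sup>2"
    define I1 where "I1 = inner (v0 ?xk z) (?xn - ?xk)"
    define I2 where "I2 = inner (v0 ?xk z) (xhat - ?xk)"
    define I3 where "I3 = inner (v0 ?xk z) (xhat - ?xn)"
    define P where "P = Psi \<sigma> \<alpha> ?th ?xn"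
    define Ph where "Ph = Psi \<sigma> \<alpha> ?th xhat"
    have "P + N1 \<le> Ph" using tp nc unfolding P_def Ph_def N1_def by simp
    moreover have "P = I1 + Q1 + N2" using P1 unfolding P_def I1_def Q1_def N2_def by simp
    moreover have "Ph \<le> I2 + Q2 + N3" using P2 unfolding Ph_def I2_def Q2_def N3_def by simp
    moreover have "I3 \<le> \<kappa>f * R" using inn unfolding I3_def .
    moreover have "I2 - I1 = I3" using lin unfolding I1_def I2_def I3_def .
    moreover have "0 \<le> N2" using nn unfolding N2_def .
    ultimately have "Q1 + N1 \<le> \<kappa>f * R + Q2 + N3" by linarith
    then show ?thesis unfolding Q1_def Q2_def N1_def N3_def .
  qed
  have "2*\<sigma> * ((1/(2*\<sigma>)) * (norm ?l')\<^sup>2 + (\<alpha>/2) * (norm (xhat - ?xn))\<^sup>2) \<le>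
     2*\<sigma> * (\<kappa>f * R + (1/(2*\<sigma>)) * ((norm ?l)\<^sup>2 + 2 * \<sigma> * inner ?l (G xhat z) + \<sigma>\<^sup>2 * \<nu>g\<^sup>2) + (\<alpha>/2) * (norm (xhat - ?xk))\<^sup>2)"
    using main sp by (intro mult_left_mono) auto
  then show ?thesis unfolding V_def using sp by (simp add: algebra_simps power2_eq_square)
qed

end



lemma measurable_vec_lambda:
  fixes f :: "'a \<Rightarrow> 'p::finite \<Rightarrow> 'b::euclidean_space"
  assumes "\<And>i. (\<lambda>x. f x i) \<in> borel_measurable M"
  shows "(\<lambda>x. \<chi> i. f x i) \<in> borel_measurable M"
proof (subst borel_measurable_euclidean_space, intro ballI)
  fix b :: "'b^'p" assume "b \<in> Basis"
  then obtain i u where b: "b = axis i u" "u \<in> Basis" unfolding Basis_vec_def by auto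
  have "(\<lambda>x. (\<chi> i. f x i) \<bullet> b) = (\<lambda>x. f x i \<bullet> u)" unfolding b by (simp add: inner_axis)
  moreover have "(\<lambda>x. f x i \<bullet> u) \<in> borel_measurable M" using assms[of i] by measurable
  ultimately show "(\<lambda>x. (\<chi> i. f x i) \<bullet> b) \<in> borel_measurable M" by simp
qed

primrec run :: "('s \<Rightarrow> 'q \<Rightarrow> 's) \<Rightarrow> 's \<Rightarrow> nat \<Rightarrow> nat \<Rightarrow> (nat \<Rightarrow> 'q) \<Rightarrow> 's" where
  "run T y m 0 f = y"
| "run T y m (Suc j) f = T (run T y m j f) (f (m + j))"

lemma run_add: "run T y m (j1 + j2) f = run T (run T y m j1 f) (m + j1) j2 f"
  by (induction j2) (simp_all add: add.assoc)

lemma run_cong: "(\<And>i. m \<le> i \<Longrightarrow> i < m + j \<Longrightarrow> f i = g i) \<Longrightarrow> run T y m j f = run T y m j g"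
  by (induction j) auto

lemma run_meas:
  fixes T :: "'s::second_countable_topology \<Rightarrow> 'q::second_countable_topology \<Rightarrow> 's"
  assumes T: "(\<lambda>p. T (fst p) (snd p)) \<in> borel_measurable borel"
    and Ys: "Ys \<in> borel_measurable N"
    and W: "\<And>i. i < j \<Longrightarrow> (\<lambda>x. W x (m + i)) \<in> borel_measurable N"
  shows "(\<lambda>x. run T (Ys x) m j (W x)) \<in> borel_measurable N"
  using W
proof (induction j)
  case 0 then show ?case using Ys by simp
next
  case (Suc j)
  have a: "(\<lambda>x. run T (Ys x) m j (W x)) \<in> borel_measurable N" using Suc by simp
  have b: "(\<lambda>x. W x (m + j)) \<in> borel_measurable N" using Suc by simp
  have "(\<lambda>x. (run T (Ys x) m j (W x), W x (m + j))) \<in> borel_measurable N"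
    using a b by (rule borel_measurable_Pair)
  from measurable_compose[OF this T] show ?case by simp
qed

context slp
begin

definition ok :: "'n \<times> (real^'p) \<Rightarrow> bool" where
  "ok y \<longleftrightarrow> fst y \<in> C \<and> (\<forall>i. 0 \<le> snd y $ i)"

lemma ok_step: "ok (step y z)"
  unfolding ok_def using step_C step_nonneg by blast

lemma ok_run: "ok y \<Longrightarrow> ok (run step y m j f)"
  by (cases j) (auto simp: ok_step)

lemma run_incr:
  assumes "ok y" "\<And>i. m \<le> i \<Longrightarrow> i < m + j \<Longrightarrow> f i \<in> Xset"
  shows "norm (snd (run step y m j f) - snd y) \<le> real j * (\<sigma> * bet)"
  using assms(2)
proof (induction j)
  case 0 then show ?case by simp
next
  case (Suc j)
  have okj: "ok (run step y m j f)" using ok_run[OF assms(1)] .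
  have "norm (snd (run step y m (Suc j) f) - snd (run step y m j f)) \<le> \<sigma> * bet"
    using step_incr[of "run step y m j f" "f (m+j)"] okj Suc.prems[of "m+j"] unfolding ok_def by simp
  moreover have "norm (snd (run step y m j f) - snd y) \<le> real j * (\<sigma> * bet)" using Suc by simp
  ultimately show ?case
    using norm_triangle_ineq[of "snd (run step y m (Suc j) f) - snd (run step y m j f)" "snd (run step y m j f) - snd y"]
    by (simp add: algebra_simps)
qed

lemma run_Z:
  assumes "ok y" "\<And>i. m \<le> i \<Longrightarrow> i < m + j \<Longrightarrow> f i \<in> Xset"
  shows "\<bar>norm (snd (run step y m j f)) - norm (snd y)\<bar> \<le> real j * (\<sigma> * bet)"
proof -
  have "norm (snd (run step y m j f) - snd y) \<le> real j * (\<sigma> * bet)"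
    by (rule run_incr) (use assms in auto)
  then show ?thesis using norm_triangle_ineq3[of "snd (run step y m j f)" "snd y"] by linarith
qed

end

locale slpm = slp C \<sigma> \<alpha> F G v0 v Xset R \<nu>g \<kappa>f \<kappa>g xhat
  for C :: "'n::euclidean_space set" and \<sigma> \<alpha> :: real
    and F :: "'n \<Rightarrow> 'q::euclidean_space \<Rightarrow> real"
    and G :: "'n \<Rightarrow> 'q \<Rightarrow> real^'p"
    and v0 :: "'n \<Rightarrow> 'q \<Rightarrow> 'n"
    and v :: "'p \<Rightarrow> 'n \<Rightarrow> 'q \<Rightarrow> 'n"
    and Xset R \<nu>g \<kappa>f \<kappa>g xhat +
  assumes G_meas: "(\<lambda>y. G (fst y) (snd y)) \<in> borel_measurable borel"
    and v0_meas: "(\<lambda>y. v0 (fst y) (snd y)) \<in> borel_measurable borel"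
    and v_meas: "\<And>i. (\<lambda>y. v i (fst y) (snd y)) \<in> borel_measurable borel"
begin

lemma comp2_meas:
  fixes H :: "'n \<Rightarrow> 'q \<Rightarrow> 'b::euclidean_space"
  assumes "(\<lambda>y. H (fst y) (snd y)) \<in> borel_measurable borel"
  shows "(\<lambda>p::('n \<times> (real^'p)) \<times> 'q. H (fst (fst p)) (snd p)) \<in> borel_measurable borel"
proof -
  have "(\<lambda>p::('n \<times> (real^'p)) \<times> 'q. (fst (fst p), snd p)) \<in> borel_measurable borel"
    by (intro borel_measurable_continuous_onI continuous_intros)
  from measurable_compose[OF this assms] show ?thesis by simp
qed

lemma prm_meas: "(\<lambda>p. prm (fst p) (snd p)) \<in> borel_measurable borel"
proof -
  have 1: "(\<lambda>p::('n \<times> (real^'p)) \<times> 'q. fst (fst p)) \<in> borel_measurable borel"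
    by (intro borel_measurable_continuous_onI continuous_intros)
  have 2: "(\<lambda>p::('n \<times> (real^'p)) \<times> 'q. snd (fst p)) \<in> borel_measurable borel"
    by (intro borel_measurable_continuous_onI continuous_intros)
  have 3: "(\<lambda>p::('n \<times> (real^'p)) \<times> 'q. \<chi> i. v i (fst (fst p)) (snd p)) \<in> borel_measurable borel"
    by (intro measurable_vec_lambda comp2_meas v_meas)
  show ?thesis unfolding prm_def
    by (intro borel_measurable_Pair 1 2 3 comp2_meas G_meas v0_meas)
qed

lemma step_fst_meas: "(\<lambda>p. fst (step (fst p) (snd p))) \<in> borel_measurable borel"
  unfolding step_fst
  using measurable_compose[OF prm_meas borel_measurable_continuous_onI[OF amin_cont]] by simp

lemma step_meas: "(\<lambda>p. step (fst p) (snd p)) \<in> borel_measurable borel"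
proof -
  have s: "(\<lambda>p. snd (step (fst p) (snd p))) \<in> borel_measurable borel"
  proof -
    have c1: "(\<lambda>p::('n \<times> (real^'p)) \<times> 'q. snd (fst p) $ i) \<in> borel_measurable borel" for i
      by (intro borel_measurable_continuous_onI continuous_intros)
    have c2: "(\<lambda>p::('n \<times> (real^'p)) \<times> 'q. G (fst (fst p)) (snd p) $ i) \<in> borel_measurable borel" for i
      using measurable_compose[OF comp2_meas[OF G_meas] borel_measurable_continuous_onI[OF continuous_on_component[OF continuous_on_id]]]
      by simp
    have c3: "(\<lambda>p::('n \<times> (real^'p)) \<times> 'q. fst (fst p)) \<in> borel_measurable borel"
      by (intro borel_measurable_continuous_onI continuous_intros)
    have c4: "(\<lambda>p. inner (v i (fst (fst p)) (snd p)) (fst (step (fst p) (snd p)) - fst (fst p))) \<in> borel_measurable borel" for i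
      using comp2_meas[OF v_meas[of i]] step_fst_meas c3 by measurable
    have "(\<lambda>p. \<chi> i. max 0 (snd (fst p) $ i + \<sigma> * (G (fst (fst p)) (snd p) $ i
         + inner (v i (fst (fst p)) (snd p)) (fst (step (fst p) (snd p)) - fst (fst p))))) \<in> borel_measurable borel"
      by (intro measurable_vec_lambda borel_measurable_max borel_measurable_const borel_measurable_add borel_measurable_times c1 c2 c4)
    then show ?thesis by (subst step_snd) simp
  qed
  have "(\<lambda>p. (fst (step (fst p) (snd p)), snd (step (fst p) (snd p)))) \<in> borel_measurable borel"
    by (intro borel_measurable_Pair step_fst_meas s)
  then show ?thesis by simp
qed

end



locale slpP = slpm C \<sigma> \<alpha> F G v0 v Xset R \<nu>g \<kappa>f \<kappa>g xhat
  for C :: "'n::euclidean_space set" and \<sigma> \<alpha> :: real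
    and F :: "'n \<Rightarrow> 'q::euclidean_space \<Rightarrow> real"
    and G :: "'n \<Rightarrow> 'q \<Rightarrow> real^'p"
    and v0 :: "'n \<Rightarrow> 'q \<Rightarrow> 'n"
    and v :: "'p \<Rightarrow> 'n \<Rightarrow> 'q \<Rightarrow> 'n"
    and Xset R \<nu>g \<kappa>f \<kappa>g xhat +
  fixes M :: "'w measure" and Xi :: "nat \<Rightarrow> 'w \<Rightarrow> 'q" and x0 :: 'n and \<epsilon>0 :: real
  assumes P: "prob_space M"
    and Xi_rv: "\<And>k. Xi k \<in> borel_measurable M"
    and Xi_indep: "prob_space.indep_vars M (\<lambda>_. borel) Xi UNIV"
    and Xi_ident: "\<And>k. distr M borel (Xi k) = distr M borel (Xi 0)"
    and Xi_supp: "\<And>k. AE \<omega> in M. Xi k \<omega> \<in> Xset"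
    and x0_C: "x0 \<in> C"
begin

interpretation prob_space M by (rule P)

abbreviation X :: "'w \<Rightarrow> nat \<Rightarrow> 'q" where "X \<omega> \<equiv> (\<lambda>i. Xi i \<omega>)"

lemma ok0: "ok (x0, 0)" unfolding ok_def using x0_C by simp

lemma run_meas_M:
  assumes "Ys \<in> borel_measurable M"
  shows "(\<lambda>\<omega>. run step (Ys \<omega>) m j (X \<omega>)) \<in> borel_measurable M"
  by (rule run_meas[OF step_meas assms]) (simp add: Xi_rv)

lemma AE_all: "AE \<omega> in M. \<forall>i. Xi i \<omega> \<in> Xset"
  using Xi_supp by (simp add: AE_all_countable)

lemma Gx_meas: "(\<lambda>z. G xhat z $ i) \<in> borel_measurable borel"
proof -
  have "(\<lambda>z::'q. (xhat, z)) \<in> borel_measurable borel"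
    by (intro borel_measurable_continuous_onI continuous_intros)
  from measurable_compose[OF this G_meas] have "(\<lambda>z. G xhat z) \<in> borel_measurable borel" by simp
  from measurable_compose[OF this borel_measurable_continuous_onI[OF continuous_on_component[OF continuous_on_id]]]
  show ?thesis by simp
qed

lemma indep1: "indep_var borel (\<lambda>\<omega>. snd (run step y m j (X \<omega>)) $ i) borel (\<lambda>\<omega>. G xhat (Xi (m + j) \<omega>) $ i)"
proof -
  have ind: "indep_var (PiM {m..<m+j} (\<lambda>_. borel)) (\<lambda>\<omega>. restrict (X \<omega>) {m..<m+j})
      (PiM {m+j} (\<lambda>_. borel)) (\<lambda>\<omega>. restrict (X \<omega>) {m+j})"
    by (rule indep_var_restrict[OF Xi_indep]) auto
  have f0: "(\<lambda>u. run step y m j u) \<in> borel_measurable (PiM {m..<m+j} (\<lambda>_. borel :: 'q measure))"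
    by (rule run_meas[OF step_meas, where Ys="\<lambda>_. y", simplified])
       (rule measurable_component_singleton, simp)
  have f1: "(\<lambda>u. snd (run step y m j u) $ i) \<in> borel_measurable (PiM {m..<m+j} (\<lambda>_. borel :: 'q measure))"
    using measurable_compose[OF f0 borel_measurable_continuous_onI[OF continuous_on_component[OF continuous_on_snd[OF continuous_on_id]]]]
    by simp
  have f2': "(\<lambda>u. u (m+j)) \<in> measurable (PiM {m+j} (\<lambda>_. borel :: 'q measure)) borel"
    by (rule measurable_component_singleton) simp
  have f2: "(\<lambda>u. G xhat (u (m+j)) $ i) \<in> borel_measurable (PiM {m+j} (\<lambda>_. borel :: 'q measure))"
    using measurable_compose[OF f2' Gx_meas] by simp
  have "indep_var borel ((\<lambda>u. snd (run step y m j u) $ i) \<circ> (\<lambda>\<omega>. restrict (X \<omega>) {m..<m+j}))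
                  borel ((\<lambda>u. G xhat (u (m+j)) $ i) \<circ> (\<lambda>\<omega>. restrict (X \<omega>) {m+j}))"
    by (rule indep_var_compose[OF ind f1 f2])
  moreover have "(\<lambda>u. snd (run step y m j u) $ i) \<circ> (\<lambda>\<omega>. restrict (X \<omega>) {m..<m+j}) = (\<lambda>\<omega>. snd (run step y m j (X \<omega>)) $ i)"
    by (rule ext) (auto intro!: run_cong arg_cong[where f="\<lambda>a. snd a $ i"])
  moreover have "(\<lambda>u. G xhat (u (m+j)) $ i) \<circ> (\<lambda>\<omega>. restrict (X \<omega>) {m+j}) = (\<lambda>\<omega>. G xhat (Xi (m + j) \<omega>) $ i)"
    by (rule ext) simp
  ultimately show ?thesis by simp
qed

lemma markov:
  fixes h Bf :: "'n \<times> (real^'p) \<Rightarrow> ennreal"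
  assumes h: "h \<in> borel_measurable borel" and Bf: "Bf \<in> borel_measurable borel"
    and bound: "\<And>y. ok y \<Longrightarrow> (\<integral>\<^sup>+\<omega>. h (run step y k s (X \<omega>)) \<partial>M) \<le> Bf y"
  shows "(\<integral>\<^sup>+\<omega>. h (run step (x0, 0) 0 (k + s) (X \<omega>)) \<partial>M) \<le> (\<integral>\<^sup>+\<omega>. Bf (run step (x0, 0) 0 k (X \<omega>)) \<partial>M)"
proof -
  define A where "A = {..<k}"
  define B where "B = {k..<k+s}"
  define PA where "PA = PiM A (\<lambda>_. borel :: 'q measure)"
  define PB where "PB = PiM B (\<lambda>_. borel :: 'q measure)"
  define U where "U = (\<lambda>\<omega>. restrict (X \<omega>) A)"
  define W where "W = (\<lambda>\<omega>. restrict (X \<omega>) B)"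
  define DU where "DU = distr M PA U"
  define DW where "DW = distr M PB W"
  define H where "H = (\<lambda>p. h (run step (run step (x0, 0) 0 k (fst p)) k s (snd p)))"
  have ind: "indep_var PA U PB W"
    unfolding PA_def PB_def U_def W_def A_def B_def
    by (rule indep_var_restrict[OF Xi_indep]) auto
  then have rvU: "U \<in> measurable M PA" and rvW: "W \<in> measurable M PB"
    and dist: "DU \<Otimes>\<^sub>M DW = distr M (PA \<Otimes>\<^sub>M PB) (\<lambda>\<omega>. (U \<omega>, W \<omega>))"
    unfolding DU_def DW_def using indep_var_distribution_eq by auto
  have runk_meas: "(\<lambda>u. run step (x0, 0) 0 k u) \<in> borel_measurable PA"
    unfolding PA_def
    by (rule run_meas[OF step_meas, where Ys="\<lambda>_. (x0,0)", simplified])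
       (rule measurable_component_singleton, simp add: A_def)
  have Hm: "H \<in> borel_measurable (PA \<Otimes>\<^sub>M PB)"
  proof -
    have a: "(\<lambda>p. run step (x0, 0) 0 k (fst p)) \<in> borel_measurable (PA \<Otimes>\<^sub>M PB)"
      using measurable_compose[OF measurable_fst[of PA PB] runk_meas] by simp
    have b: "(\<lambda>p. snd p (k + i)) \<in> borel_measurable (PA \<Otimes>\<^sub>M PB)" if "i < s" for i
    proof -
      have "(\<lambda>u. u (k + i)) \<in> measurable PB borel"
        unfolding PB_def by (rule measurable_component_singleton) (use that in \<open>simp add: B_def\<close>)
      from measurable_compose[OF measurable_snd[of PA PB] this] show ?thesis by simp
    qed
    have "(\<lambda>p. run step (run step (x0, 0) 0 k (fst p)) k s (snd p)) \<in> borel_measurable (PA \<Otimes>\<^sub>M PB)"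
      by (rule run_meas[OF step_meas a, where W=snd]) (rule b)
    from measurable_compose[OF this h] show ?thesis unfolding H_def .
  qed
  have sfW: "sigma_finite_measure DW"
    unfolding DW_def by (intro prob_space_imp_sigma_finite prob_space_distr rvW)
  have "(\<integral>\<^sup>+\<omega>. h (run step (x0, 0) 0 (k + s) (X \<omega>)) \<partial>M) = (\<integral>\<^sup>+\<omega>. H (U \<omega>, W \<omega>) \<partial>M)"
  proof (intro nn_integral_cong)
    fix \<omega>
    have "run step (x0, 0) 0 (k + s) (X \<omega>) = run step (run step (x0, 0) 0 k (X \<omega>)) k s (X \<omega>)"
      using run_add[of step "(x0,0)" 0 k s] by simp
    also have "\<dots> = run step (run step (x0, 0) 0 k (U \<omega>)) k s (X \<omega>)"
    proof -
      have "run step (x0, 0) 0 k (X \<omega>) = run step (x0, 0) 0 k (U \<omega>)"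
        unfolding U_def A_def by (rule run_cong) auto
      then show ?thesis by simp
    qed
    also have "\<dots> = run step (run step (x0, 0) 0 k (U \<omega>)) k s (W \<omega>)"
      unfolding W_def B_def by (rule run_cong) auto
    finally show "h (run step (x0, 0) 0 (k + s) (X \<omega>)) = H (U \<omega>, W \<omega>)" unfolding H_def by simp
  qed
  also have "\<dots> = integral\<^sup>N (distr M (PA \<Otimes>\<^sub>M PB) (\<lambda>\<omega>. (U \<omega>, W \<omega>))) H"
    by (rule nn_integral_distr[symmetric, OF measurable_Pair[OF rvU rvW]]) (simp add: Hm)
  also have "\<dots> = integral\<^sup>N (DU \<Otimes>\<^sub>M DW) H" unfolding dist ..
  also have "\<dots> = (\<integral>\<^sup>+ u. \<integral>\<^sup>+ w. H (u, w) \<partial>DW \<partial>DU)"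
  proof -
    have se: "sets (DU \<Otimes>\<^sub>M DW) = sets (PA \<Otimes>\<^sub>M PB)"
      by (rule sets_pair_measure_cong) (simp_all add: DU_def DW_def)
    have "H \<in> borel_measurable (DU \<Otimes>\<^sub>M DW)"
      by (subst measurable_cong_sets[OF se refl]) (rule Hm)
    then show ?thesis by (rule sigma_finite_measure.nn_integral_fst[OF sfW, symmetric])
  qed
  also have "\<dots> \<le> (\<integral>\<^sup>+ u. Bf (run step (x0, 0) 0 k u) \<partial>DU)"
  proof (rule nn_integral_mono)
    fix u assume u: "u \<in> space DU"
    then have uA: "u \<in> space PA" unfolding DU_def by simp
    have Hu: "(\<lambda>w. H (u, w)) \<in> borel_measurable PB"
      by (rule measurable_Pair2[OF Hm uA])
    have "(\<integral>\<^sup>+ w. H (u, w) \<partial>DW) = (\<integral>\<^sup>+ \<omega>. H (u, W \<omega>) \<partial>M)"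
      unfolding DW_def by (rule nn_integral_distr[OF rvW]) (simp add: Hu)
    also have "\<dots> = (\<integral>\<^sup>+ \<omega>. h (run step (run step (x0, 0) 0 k u) k s (X \<omega>)) \<partial>M)"
    proof -
      have eq: "run step (run step (x0, 0) 0 k u) k s (W \<omega>) = run step (run step (x0, 0) 0 k u) k s (X \<omega>)" for \<omega>
        unfolding W_def B_def by (rule run_cong) auto
      show ?thesis unfolding H_def by (simp add: eq)
    qed
    also have "\<dots> \<le> Bf (run step (x0, 0) 0 k u)"
      by (rule bound[OF ok_run[OF ok0]])
    finally show "(\<integral>\<^sup>+ w. H (u, w) \<partial>DW) \<le> Bf (run step (x0, 0) 0 k u)" .
  qed
  also have "\<dots> = (\<integral>\<^sup>+\<omega>. Bf (run step (x0, 0) 0 k (U \<omega>)) \<partial>M)"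
    unfolding DU_def by (rule nn_integral_distr[OF rvU]) (simp add: measurable_compose[OF runk_meas Bf])
  also have "\<dots> = (\<integral>\<^sup>+\<omega>. Bf (run step (x0, 0) 0 k (X \<omega>)) \<partial>M)"
  proof -
    have eq: "run step (x0, 0) 0 k (U \<omega>) = run step (x0, 0) 0 k (X \<omega>)" for \<omega>
      unfolding U_def A_def by (rule run_cong) auto
    show ?thesis by (simp add: eq)
  qed
  finally show ?thesis .
qed

end



lemma sum_nat_real: "(\<Sum>l<s. real l) = real s * (real s - 1) / 2"
  by (induction s) (auto simp: field_simps)

locale slpQ = slpP C \<sigma> \<alpha> F G v0 v Xset R \<nu>g \<kappa>f \<kappa>g xhat M Xi x0 \<epsilon>0
  for C :: "'n::euclidean_space set" and \<sigma> \<alpha> :: real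
    and F :: "'n \<Rightarrow> 'q::euclidean_space \<Rightarrow> real"
    and G :: "'n \<Rightarrow> 'q \<Rightarrow> real^'p"
    and v0 :: "'n \<Rightarrow> 'q \<Rightarrow> 'n"
    and v :: "'p \<Rightarrow> 'n \<Rightarrow> 'q \<Rightarrow> 'n"
    and Xset R \<nu>g \<kappa>f \<kappa>g xhat and M :: "'w measure" and Xi x0 \<epsilon>0 +
  assumes eps: "\<epsilon>0 > 0"
    and Gexp: "\<And>i. prob_space.expectation M (\<lambda>\<omega>. G xhat (Xi 0 \<omega>) $ i) \<le> - \<epsilon>0"
begin

interpretation prob_space M by (rule P)

definition Yr :: "'n \<times> (real^'p) \<Rightarrow> nat \<Rightarrow> nat \<Rightarrow> 'w \<Rightarrow> 'n \<times> (real^'p)" where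
  "Yr y m j \<omega> = run step y m j (X \<omega>)"

definition Zr :: "'n \<times> (real^'p) \<Rightarrow> nat \<Rightarrow> nat \<Rightarrow> 'w \<Rightarrow> real" where
  "Zr y m j \<omega> = norm (snd (Yr y m j \<omega>))"

definition dl :: real where "dl = \<sigma> * bet"

lemma Yr_Suc: "Yr y m (Suc j) \<omega> = step (Yr y m j \<omega>) (Xi (m + j) \<omega>)"
  by (simp add: Yr_def)

lemma Yr_meas: "Yr y m j \<in> borel_measurable M"
  unfolding Yr_def[abs_def] by (rule run_meas_M) simp

lemma cont_meas: "continuous_on UNIV f \<Longrightarrow> g \<in> borel_measurable M \<Longrightarrow> (\<lambda>x. f (g x)) \<in> borel_measurable M"
  using measurable_compose[OF _ borel_measurable_continuous_onI] by blast

lemma Zr_meas: "Zr y m j \<in> borel_measurable M"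
  unfolding Zr_def[abs_def] by (rule cont_meas[OF _ Yr_meas]) (intro continuous_intros)

lemma comp_meas: "(\<lambda>\<omega>. snd (Yr y m j \<omega>) $ i) \<in> borel_measurable M"
  by (rule cont_meas[OF _ Yr_meas]) (intro continuous_intros)

lemma V_meas: "(\<lambda>\<omega>. V (Yr y m j \<omega>)) \<in> borel_measurable M"
  unfolding V_def by (rule cont_meas[OF _ Yr_meas]) (intro continuous_intros)

lemma Gk_meas: "(\<lambda>\<omega>. G xhat (Xi k \<omega>) $ i) \<in> borel_measurable M"
  using measurable_compose[OF Xi_rv Gx_meas] by simp

lemma ok_Yr: "ok y \<Longrightarrow> ok (Yr y m j \<omega>)"
  unfolding Yr_def by (rule ok_run)

lemma AE_Z: "ok y \<Longrightarrow> AE \<omega> in M. \<forall>j. \<bar>Zr y m j \<omega> - norm (snd y)\<bar> \<le> real j * dl"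
  using AE_all
proof eventually_elim
  case (elim \<omega>)
  assume "ok y"
  show ?case unfolding Zr_def Yr_def dl_def
    by (intro allI run_Z \<open>ok y\<close>) (use elim in auto)
qed

lemma Z_nonneg: "0 \<le> Zr y m j \<omega>" unfolding Zr_def by simp

lemma Zr_int: "ok y \<Longrightarrow> integrable M (Zr y m j)"
proof (rule integrable_const_bound[where B="norm (snd y) + real j * dl"])
  assume "ok y"
  show "AE x in M. norm (Zr y m j x) \<le> norm (snd y) + real j * dl"
    using AE_Z[OF \<open>ok y\<close>, of m]
  proof eventually_elim
    case (elim x)
    have "Zr y m j x \<le> norm (snd y) + real j * dl" using elim[rule_format, of j] by linarith
    then show ?case using Z_nonneg[of y m j x] by simp
  qed
qed (rule Zr_meas)

lemma comp_int: "ok y \<Longrightarrow> integrable M (\<lambda>\<omega>. snd (Yr y m j \<omega>) $ i)"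
proof (rule integrable_const_bound[where B="norm (snd y) + real j * dl"])
  assume "ok y"
  show "AE x in M. norm (snd (Yr y m j x) $ i) \<le> norm (snd y) + real j * dl"
    using AE_Z[OF \<open>ok y\<close>, of m]
  proof eventually_elim
    case (elim x)
    have "norm (snd (Yr y m j x) $ i) \<le> Zr y m j x" unfolding Zr_def using component_le_norm_cart[of "snd (Yr y m j x)" i] by simp
    then show ?case using elim[rule_format, of j] by linarith
  qed
qed (rule comp_meas)

lemma Gk_bound: "AE \<omega> in M. \<bar>G xhat (Xi k \<omega>) $ i\<bar> \<le> \<nu>g"
  using Xi_supp[of k]
proof eventually_elim
  case (elim \<omega>)
  then show ?case using A2[OF xhat elim] component_le_norm_cart[of "G xhat (Xi k \<omega>)" i] by linarith
qed

lemma Gk_int: "integrable M (\<lambda>\<omega>. G xhat (Xi k \<omega>) $ i)"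
  by (rule integrable_const_bound[where B=\<nu>g]) (use Gk_bound Gk_meas in simp_all)

lemma Gk_exp: "expectation (\<lambda>\<omega>. G xhat (Xi k \<omega>) $ i) \<le> - \<epsilon>0"
proof -
  have "expectation (\<lambda>\<omega>. G xhat (Xi k \<omega>) $ i) = integral\<^sup>L (distr M borel (Xi k)) (\<lambda>z. G xhat z $ i)"
    by (rule integral_distr[symmetric, OF Xi_rv Gx_meas])
  also have "\<dots> = integral\<^sup>L (distr M borel (Xi 0)) (\<lambda>z. G xhat z $ i)" by (simp add: Xi_ident[of k])
  also have "\<dots> = expectation (\<lambda>\<omega>. G xhat (Xi 0 \<omega>) $ i)"
    by (rule integral_distr[OF Xi_rv Gx_meas])
  finally show ?thesis using Gexp[of i] by simp
qed

lemma V_bound: "ok y' \<Longrightarrow> \<bar>V y'\<bar> \<le> (norm (snd y'))\<^sup>2 + \<alpha> * \<sigma> * R\<^sup>2"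
proof -
  assume "ok y'"
  then have "norm (xhat - fst y') \<le> R" using A1[OF xhat] unfolding ok_def by blast
  then have "(norm (xhat - fst y'))\<^sup>2 \<le> R\<^sup>2" by (intro power_mono) auto
  then have "\<alpha> * \<sigma> * (norm (xhat - fst y'))\<^sup>2 \<le> \<alpha> * \<sigma> * R\<^sup>2" using ap sp by (intro mult_left_mono) auto
  moreover have "0 \<le> \<alpha> * \<sigma> * (norm (xhat - fst y'))\<^sup>2" using ap sp by simp
  ultimately show ?thesis unfolding V_def by simp
qed

lemma V_int: "ok y \<Longrightarrow> integrable M (\<lambda>\<omega>. V (Yr y m j \<omega>))"
proof (rule integrable_const_bound[where B="(norm (snd y) + real j * dl)\<^sup>2 + \<alpha> * \<sigma> * R\<^sup>2"])
  assume oky: "ok y"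
  show "AE x in M. norm (V (Yr y m j x)) \<le> (norm (snd y) + real j * dl)\<^sup>2 + \<alpha> * \<sigma> * R\<^sup>2"
    using AE_Z[OF oky, of m]
  proof eventually_elim
    case (elim x)
    have "Zr y m j x \<le> norm (snd y) + real j * dl" using elim[rule_format, of j] by linarith
    then have "(Zr y m j x)\<^sup>2 \<le> (norm (snd y) + real j * dl)\<^sup>2" by (intro power_mono) (auto simp: Z_nonneg)
    then show ?case using V_bound[OF ok_Yr[OF oky, of m j x]] unfolding Zr_def by simp
  qed
qed (rule V_meas)

lemma inner_int: "ok y \<Longrightarrow> integrable M (\<lambda>\<omega>. snd (Yr y m j \<omega>) $ i * G xhat (Xi (m + j) \<omega>) $ i)"
  using indep_var_integrable[OF _ comp_int Gk_int] indep1 unfolding Yr_def by blast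

lemma inner_exp:
  assumes oky: "ok y"
  shows "expectation (\<lambda>\<omega>. inner (snd (Yr y m j \<omega>)) (G xhat (Xi (m + j) \<omega>))) \<le> - \<epsilon>0 * expectation (Zr y m j)"
proof -
  have "expectation (\<lambda>\<omega>. inner (snd (Yr y m j \<omega>)) (G xhat (Xi (m + j) \<omega>)))
      = expectation (\<lambda>\<omega>. \<Sum>i\<in>UNIV. snd (Yr y m j \<omega>) $ i * G xhat (Xi (m + j) \<omega>) $ i)"
    by (simp add: inner_vec_def)
  also have "\<dots> = (\<Sum>i\<in>UNIV. expectation (\<lambda>\<omega>. snd (Yr y m j \<omega>) $ i * G xhat (Xi (m + j) \<omega>) $ i))"
    by (rule Bochner_Integration.integral_sum) (use inner_int[OF oky] in auto)
  also have "\<dots> = (\<Sum>i\<in>UNIV. expectation (\<lambda>\<omega>. snd (Yr y m j \<omega>) $ i) * expectation (\<lambda>\<omega>. G xhat (Xi (m + j) \<omega>) $ i))"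
  proof (rule sum.cong[OF refl])
    fix i
    show "expectation (\<lambda>\<omega>. snd (Yr y m j \<omega>) $ i * G xhat (Xi (m + j) \<omega>) $ i)
        = expectation (\<lambda>\<omega>. snd (Yr y m j \<omega>) $ i) * expectation (\<lambda>\<omega>. G xhat (Xi (m + j) \<omega>) $ i)"
      using indep_var_lebesgue_integral[OF _ comp_int[OF oky] Gk_int] indep1 unfolding Yr_def by blast
  qed
  also have "\<dots> \<le> (\<Sum>i\<in>UNIV. expectation (\<lambda>\<omega>. snd (Yr y m j \<omega>) $ i) * (- \<epsilon>0))"
  proof (rule sum_mono)
    fix i
    have "0 \<le> expectation (\<lambda>\<omega>. snd (Yr y m j \<omega>) $ i)"
      using ok_Yr[OF oky] unfolding ok_def by (intro integral_nonneg_AE) auto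
    then show "expectation (\<lambda>\<omega>. snd (Yr y m j \<omega>) $ i) * expectation (\<lambda>\<omega>. G xhat (Xi (m + j) \<omega>) $ i)
        \<le> expectation (\<lambda>\<omega>. snd (Yr y m j \<omega>) $ i) * (- \<epsilon>0)"
      by (intro mult_left_mono Gk_exp)
  qed
  also have "\<dots> = - \<epsilon>0 * expectation (\<lambda>\<omega>. \<Sum>i\<in>UNIV. snd (Yr y m j \<omega>) $ i)"
    by (subst Bochner_Integration.integral_sum) (auto simp: comp_int[OF oky] sum_distrib_left mult.commute)
  also have "\<dots> \<le> - \<epsilon>0 * expectation (Zr y m j)"
  proof -
    have "expectation (Zr y m j) \<le> expectation (\<lambda>\<omega>. \<Sum>i\<in>UNIV. snd (Yr y m j \<omega>) $ i)"
    proof (rule integral_mono)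
      show "integrable M (Zr y m j)" by (rule Zr_int[OF oky])
      show "integrable M (\<lambda>\<omega>. \<Sum>i\<in>UNIV. snd (Yr y m j \<omega>) $ i)" by (rule Bochner_Integration.integrable_sum) (rule comp_int[OF oky])
      fix \<omega>
      have "Zr y m j \<omega> \<le> (\<Sum>i\<in>UNIV. \<bar>snd (Yr y m j \<omega>) $ i\<bar>)" unfolding Zr_def by (rule norm_le_l1_cart)
      also have "\<dots> = (\<Sum>i\<in>UNIV. snd (Yr y m j \<omega>) $ i)"
        using ok_Yr[OF oky, of m j \<omega>] unfolding ok_def by simp
      finally show "Zr y m j \<omega> \<le> (\<Sum>i\<in>UNIV. snd (Yr y m j \<omega>) $ i)" .
    qed
    then show ?thesis using eps by simp
  qed
  finally show ?thesis .
qed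

end



lemma (in prob_space) sq_exp_le:
  fixes Z :: "'a \<Rightarrow> real"
  assumes "integrable M Z" "integrable M (\<lambda>x. (Z x)\<^sup>2)"
  shows "(expectation Z)\<^sup>2 \<le> expectation (\<lambda>x. (Z x)\<^sup>2)"
proof -
  define c where "c = expectation Z"
  have "0 \<le> expectation (\<lambda>x. (Z x - c)\<^sup>2)" by (intro integral_nonneg_AE) auto
  also have "(\<lambda>x. (Z x - c)\<^sup>2) = (\<lambda>x. (Z x)\<^sup>2 + ((- 2 * c) * Z x + c\<^sup>2))"
    by (rule ext) (simp add: power2_eq_square algebra_simps)
  also have "expectation \<dots> = expectation (\<lambda>x. (Z x)\<^sup>2) + ((- 2 * c) * expectation Z + c\<^sup>2)"
    using assms by (simp add: prob_space)
  finally show ?thesis unfolding c_def by (simp add: power2_eq_square)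
qed

context slpQ
begin

interpretation prob_space M by (rule P)

lemma innerf_int: "ok y \<Longrightarrow> integrable M (\<lambda>\<omega>. inner (snd (Yr y m j \<omega>)) (G xhat (Xi (m + j) \<omega>)))"
  unfolding inner_vec_def inner_real_def
  by (rule Bochner_Integration.integrable_sum) (rule inner_int)

definition c1 :: real where "c1 = \<sigma>\<^sup>2 * \<nu>g\<^sup>2 + 2 * \<sigma> * \<kappa>f * R"

lemma V_step_exp:
  assumes oky: "ok y"
  shows "expectation (\<lambda>\<omega>. V (Yr y m (Suc j) \<omega>)) \<le> expectation (\<lambda>\<omega>. V (Yr y m j \<omega>)) - 2 * \<sigma> * \<epsilon>0 * expectation (Zr y m j) + c1"
proof -
  have "expectation (\<lambda>\<omega>. V (Yr y m (Suc j) \<omega>)) \<le>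
      expectation (\<lambda>\<omega>. V (Yr y m j \<omega>) + (2 * \<sigma>) * inner (snd (Yr y m j \<omega>)) (G xhat (Xi (m + j) \<omega>)) + c1)"
  proof (rule integral_mono_AE)
    show "integrable M (\<lambda>\<omega>. V (Yr y m (Suc j) \<omega>))" by (rule V_int[OF oky])
    show "integrable M (\<lambda>\<omega>. V (Yr y m j \<omega>) + (2 * \<sigma>) * inner (snd (Yr y m j \<omega>)) (G xhat (Xi (m + j) \<omega>)) + c1)"
      using V_int[OF oky] innerf_int[OF oky] by simp
    show "AE \<omega> in M. V (Yr y m (Suc j) \<omega>) \<le> V (Yr y m j \<omega>) + (2 * \<sigma>) * inner (snd (Yr y m j \<omega>)) (G xhat (Xi (m + j) \<omega>)) + c1"
      using Xi_supp[of "m+j"]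
    proof eventually_elim
      case (elim \<omega>)
      have "fst (Yr y m j \<omega>) \<in> C" using ok_Yr[OF oky] unfolding ok_def by blast
      from step_V[OF this elim] show ?case unfolding Yr_Suc c1_def by (simp add: mult.assoc)
    qed
  qed
  also have "\<dots> = expectation (\<lambda>\<omega>. V (Yr y m j \<omega>)) + (2 * \<sigma>) * expectation (\<lambda>\<omega>. inner (snd (Yr y m j \<omega>)) (G xhat (Xi (m + j) \<omega>))) + c1"
    using V_int[OF oky] innerf_int[OF oky] by (simp add: prob_space)
  also have "\<dots> \<le> expectation (\<lambda>\<omega>. V (Yr y m j \<omega>)) + (2 * \<sigma>) * (- \<epsilon>0 * expectation (Zr y m j)) + c1"
    using inner_exp[OF oky, of m j] sp by (intro add_mono mult_left_mono) auto
  finally show ?thesis by simp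
qed

lemma Z_exp_lb: "ok y \<Longrightarrow> norm (snd y) - real j * dl \<le> expectation (Zr y m j)"
proof -
  assume oky: "ok y"
  have "expectation (\<lambda>_. norm (snd y) - real j * dl) \<le> expectation (Zr y m j)"
  proof (rule integral_mono_AE)
    show "integrable M (Zr y m j)" by (rule Zr_int[OF oky])
    show "AE x in M. norm (snd y) - real j * dl \<le> Zr y m j x"
      using AE_Z[OF oky, of m]
    proof eventually_elim
      case (elim x) then show ?case using elim[rule_format, of j] by linarith
    qed
  qed simp
  then show ?thesis by (simp add: prob_space)
qed

lemma Yr0: "Yr y m 0 \<omega> = y" by (simp add: Yr_def)

lemma V_exp_bound:
  assumes oky: "ok y"
  shows "expectation (\<lambda>\<omega>. V (Yr y m j \<omega>)) \<le> V y - 2 * \<sigma> * \<epsilon>0 * (\<Sum>l<j. norm (snd y) - real l * dl) + real j * c1"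
proof (induction j)
  case 0 then show ?case by (simp add: Yr0 prob_space)
next
  case (Suc j)
  have "expectation (\<lambda>\<omega>. V (Yr y m (Suc j) \<omega>)) \<le> expectation (\<lambda>\<omega>. V (Yr y m j \<omega>)) - 2 * \<sigma> * \<epsilon>0 * expectation (Zr y m j) + c1"
    by (rule V_step_exp[OF oky])
  also have "\<dots> \<le> expectation (\<lambda>\<omega>. V (Yr y m j \<omega>)) - 2 * \<sigma> * \<epsilon>0 * (norm (snd y) - real j * dl) + c1"
    using Z_exp_lb[OF oky, of j m] sp eps by (intro add_mono diff_mono mult_left_mono) auto
  also have "\<dots> \<le> V y - 2 * \<sigma> * \<epsilon>0 * (\<Sum>l<Suc j. norm (snd y) - real l * dl) + real (Suc j) * c1"
    using Suc by (simp add: algebra_simps)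
  finally show ?case .
qed

lemma Zsq_int: "ok y \<Longrightarrow> integrable M (\<lambda>\<omega>. (Zr y m j \<omega>)\<^sup>2)"
proof (rule integrable_const_bound[where B="(norm (snd y) + real j * dl)\<^sup>2"])
  assume oky: "ok y"
  show "AE x in M. norm ((Zr y m j x)\<^sup>2) \<le> (norm (snd y) + real j * dl)\<^sup>2"
    using AE_Z[OF oky, of m]
  proof eventually_elim
    case (elim x)
    have "Zr y m j x \<le> norm (snd y) + real j * dl" using elim[rule_format, of j] by linarith
    then have "(Zr y m j x)\<^sup>2 \<le> (norm (snd y) + real j * dl)\<^sup>2" by (intro power_mono) (auto simp: Z_nonneg)
    then show ?case by simp
  qed
  show "(\<lambda>\<omega>. (Zr y m j \<omega>)\<^sup>2) \<in> borel_measurable M" using Zr_meas by measurable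
qed

lemma Zsq_le_V: "ok y \<Longrightarrow> expectation (\<lambda>\<omega>. (Zr y m j \<omega>)\<^sup>2) \<le> expectation (\<lambda>\<omega>. V (Yr y m j \<omega>))"
proof -
  assume oky: "ok y"
  show ?thesis
  proof (rule integral_mono)
    show "integrable M (\<lambda>\<omega>. (Zr y m j \<omega>)\<^sup>2)" by (rule Zsq_int[OF oky])
    show "integrable M (\<lambda>\<omega>. V (Yr y m j \<omega>))" by (rule V_int[OF oky])
    fix \<omega>
    show "(Zr y m j \<omega>)\<^sup>2 \<le> V (Yr y m j \<omega>)" unfolding Zr_def V_def using ap sp by simp
  qed
qed

end



lemma exp_quad: fixes x :: real assumes "\<bar>x\<bar> \<le> 1" shows "exp x \<le> 1 + x + x\<^sup>2"
proof (cases "0 \<le> x")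
  case True then show ?thesis using exp_bound[of x] assms by simp
next
  case False
  define u where "u = - x"
  have u: "0 < u" "u \<le> 1" using False assms by (auto simp: u_def)
  have e: "1 + u + u\<^sup>2 / 2 \<le> exp u" using exp_lower_Taylor_quadratic[of u] u by simp
  have pos: "0 < 1 - u + u\<^sup>2"
  proof -
    have "0 \<le> 1 - u" using u by simp
    moreover have "0 < u\<^sup>2" using u by simp
    ultimately show ?thesis by linarith
  qed
  have "1 \<le> (1 + u + u\<^sup>2 / 2) * (1 - u + u\<^sup>2)"
  proof -
    have "(1 + u + u\<^sup>2 / 2) * (1 - u + u\<^sup>2) = 1 + u\<^sup>2/2 + u^3/2 + u^4/2"
      by (simp add: power2_eq_square power3_eq_cube power4_eq_xxxx field_simps)
    moreover have "0 \<le> u\<^sup>2/2 + u^3/2 + u^4/2" using u by simp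
    ultimately show ?thesis by linarith
  qed
  also have "\<dots> \<le> exp u * (1 - u + u\<^sup>2)" using e pos by (intro mult_right_mono) auto
  finally have "1 \<le> exp u * (1 - u + u\<^sup>2)" .
  then have "inverse (exp u) \<le> 1 - u + u\<^sup>2"
    by (simp add: field_simps)
  then show ?thesis by (simp add: u_def exp_minus)
qed

lemma drift_alg:
  fixes Z0 S \<sigma> \<epsilon>0 \<alpha> R b \<nu>g \<kappa>f :: real
  assumes S: "S \<ge> 1" and sp: "\<sigma> > 0" and ep: "\<epsilon>0 > 0" and ap: "\<alpha> > 0" and R: "R \<ge> 0" and kf: "\<kappa>f \<ge> 0"
    and b: "b \<ge> 0"
    and Z: "Z0 \<ge> 2*\<kappa>f*R/\<epsilon>0 + R\<^sup>2*\<alpha>/(\<epsilon>0*S) + (\<nu>g\<^sup>2/\<epsilon>0 - b)*\<sigma> + (b + \<epsilon>0/2)*\<sigma>*S"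
  shows "Z0\<^sup>2 + \<alpha>*\<sigma>*R\<^sup>2 - 2*\<sigma>*\<epsilon>0*(S*Z0 - \<sigma>*b*(S*(S-1)/2)) + S*(\<sigma>\<^sup>2*\<nu>g\<^sup>2 + 2*\<sigma>*\<kappa>f*R) \<le> (Z0 - S*\<sigma>*\<epsilon>0/2)\<^sup>2"
    and "0 \<le> Z0 - S*\<sigma>*\<epsilon>0/2"
proof -
  define th where "th = 2*\<kappa>f*R/\<epsilon>0 + R\<^sup>2*\<alpha>/(\<epsilon>0*S) + (\<nu>g\<^sup>2/\<epsilon>0 - b)*\<sigma> + (b + \<epsilon>0/2)*\<sigma>*S"
  have K: "0 < S*\<sigma>*\<epsilon>0" using S sp ep by simp
  have "S*\<sigma>*\<epsilon>0 * th \<le> S*\<sigma>*\<epsilon>0 * Z0" using Z K unfolding th_def by (intro mult_left_mono) auto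
  moreover have "S*\<sigma>*\<epsilon>0 * th = 2*S*\<sigma>*\<kappa>f*R + \<alpha>*\<sigma>*R\<^sup>2 + S*\<sigma>\<^sup>2*\<nu>g\<^sup>2 - \<sigma>\<^sup>2*\<epsilon>0*b*S + \<sigma>\<^sup>2*\<epsilon>0*b*S\<^sup>2 + S\<^sup>2*\<sigma>\<^sup>2*\<epsilon>0\<^sup>2/2"
    unfolding th_def using S ep by (simp add: field_simps power2_eq_square)
  moreover have "(Z0 - S*\<sigma>*\<epsilon>0/2)\<^sup>2 - (Z0\<^sup>2 + \<alpha>*\<sigma>*R\<^sup>2 - 2*\<sigma>*\<epsilon>0*(S*Z0 - \<sigma>*b*(S*(S-1)/2)) + S*(\<sigma>\<^sup>2*\<nu>g\<^sup>2 + 2*\<sigma>*\<kappa>f*R))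
     = S*\<sigma>*\<epsilon>0 * Z0 + S\<^sup>2*\<sigma>\<^sup>2*\<epsilon>0\<^sup>2/4 - \<alpha>*\<sigma>*R\<^sup>2 - \<sigma>\<^sup>2*\<epsilon>0*b*S\<^sup>2 + \<sigma>\<^sup>2*\<epsilon>0*b*S - S*\<sigma>\<^sup>2*\<nu>g\<^sup>2 - 2*S*\<sigma>*\<kappa>f*R"
    by (simp add: power2_eq_square field_simps)
  moreover have "0 \<le> S\<^sup>2*\<sigma>\<^sup>2*\<epsilon>0\<^sup>2" by simp
  ultimately show "Z0\<^sup>2 + \<alpha>*\<sigma>*R\<^sup>2 - 2*\<sigma>*\<epsilon>0*(S*Z0 - \<sigma>*b*(S*(S-1)/2)) + S*(\<sigma>\<^sup>2*\<nu>g\<^sup>2 + 2*\<sigma>*\<kappa>f*R) \<le> (Z0 - S*\<sigma>*\<epsilon>0/2)\<^sup>2"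
    by linarith
  have "S*\<sigma>*\<epsilon>0/2 \<le> th"
  proof -
    have "0 \<le> 2*\<kappa>f*R/\<epsilon>0" using kf R ep by simp
    moreover have "0 \<le> R\<^sup>2*\<alpha>/(\<epsilon>0*S)" using ap ep S by simp
    moreover have "0 \<le> \<nu>g\<^sup>2/\<epsilon>0*\<sigma>" using sp ep by simp
    moreover have "0 \<le> b*\<sigma>*(S-1)" using b sp S by simp
    moreover have "th = 2*\<kappa>f*R/\<epsilon>0 + R\<^sup>2*\<alpha>/(\<epsilon>0*S) + \<nu>g\<^sup>2/\<epsilon>0*\<sigma> + b*\<sigma>*(S-1) + S*\<sigma>*\<epsilon>0/2"
      unfolding th_def by (simp add: field_simps)
    ultimately show ?thesis by linarith
  qed
  then show "0 \<le> Z0 - S*\<sigma>*\<epsilon>0/2" using Z unfolding th_def by linarith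
qed

context slpQ
begin

interpretation prob_space M by (rule P)

lemma Xset_ne: "Xset \<noteq> {}"
proof
  assume "Xset = {}"
  then have "AE \<omega> in M. False" using Xi_supp[of 0] by simp
  then show False by (simp add: AE_False)
qed

lemma R_nn: "0 \<le> R" using A1[OF x0_C x0_C] by simp

lemma kappa_nn: "0 \<le> \<kappa>f" "0 \<le> \<kappa>g"
proof -
  obtain z where z: "z \<in> Xset" using Xset_ne by auto
  show "0 \<le> \<kappa>f" using A3[OF x0_C z] norm_ge_zero order_trans by blast
  show "0 \<le> \<kappa>g" using A3[OF x0_C z, of undefined] norm_ge_zero order_trans by blast
qed

lemma nu_ge: "\<epsilon>0 \<le> \<nu>g"
proof -
  have "expectation (\<lambda>_. - \<nu>g) \<le> expectation (\<lambda>\<omega>. G xhat (Xi 0 \<omega>) $ undefined)"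
  proof (rule integral_mono_AE)
    show "integrable M (\<lambda>\<omega>. G xhat (Xi 0 \<omega>) $ undefined)" by (rule Gk_int)
    show "AE x in M. - \<nu>g \<le> G xhat (Xi 0 x) $ undefined"
      using Gk_bound[of 0 undefined] by eventually_elim (simp add: abs_le_iff)
  qed simp
  then show ?thesis using Gexp[of undefined] by (simp add: prob_space)
qed

lemma bet_ge: "\<epsilon>0 \<le> bet"
proof -
  have "0 \<le> sqrt (real CARD('p)) * \<kappa>g * R" using kappa_nn R_nn by simp
  then show ?thesis using nu_ge unfolding bet_def by linarith
qed

lemma bet_pos: "0 < bet" using bet_ge eps by linarith

definition thet :: "nat \<Rightarrow> real" where
  "thet s = 2*\<kappa>f*R/\<epsilon>0 + R\<^sup>2*\<alpha>/(\<epsilon>0*real s) + (\<nu>g\<^sup>2/\<epsilon>0 - bet)*\<sigma> + (bet + \<epsilon>0/2)*\<sigma>*real s"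

definition rr :: "nat \<Rightarrow> real" where "rr s = \<epsilon>0 / (8 * real s * \<sigma> * bet\<^sup>2)"

definition rho :: real where "rho = 1 - \<epsilon>0\<^sup>2 / (32 * bet\<^sup>2)"

lemma rho_props: "0 \<le> rho" "rho < 1"
proof -
  have "\<epsilon>0\<^sup>2 \<le> bet\<^sup>2" using bet_ge eps by (intro power_mono) auto
  moreover have "0 \<le> bet\<^sup>2" by simp
  ultimately have "\<epsilon>0\<^sup>2 \<le> 32 * bet\<^sup>2" by linarith
  then have "\<epsilon>0\<^sup>2 / (32 * bet\<^sup>2) \<le> 1" using bet_pos by (simp add: field_simps)
  then show "0 \<le> rho" unfolding rho_def by simp
  show "rho < 1" unfolding rho_def using eps bet_pos by simp
qed

lemma drift:
  assumes oky: "ok y" and s: "s \<ge> 1" and Z: "thet s \<le> norm (snd y)"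
  shows "expectation (Zr y m s) \<le> norm (snd y) - real s * \<sigma> * \<epsilon>0 / 2"
proof -
  let ?Z0 = "norm (snd y)" and ?S = "real s"
  have S1: "?S \<ge> 1" using s by simp
  have "(\<Sum>l<s. ?Z0 - real l * dl) = (\<Sum>l<s. ?Z0) - (\<Sum>l<s. real l) * dl"
    by (simp add: sum_subtractf sum_distrib_right)
  also have "\<dots> = ?S * ?Z0 - (?S * (?S - 1) / 2) * dl" by (simp add: sum_nat_real)
  finally have sumeq: "(\<Sum>l<s. ?Z0 - real l * dl) = ?S * ?Z0 - \<sigma> * bet * (?S * (?S - 1) / 2)"
    by (simp add: dl_def algebra_simps)
  have Vy: "V y \<le> ?Z0\<^sup>2 + \<alpha> * \<sigma> * R\<^sup>2" using V_bound[OF oky] by simp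
  have "(expectation (Zr y m s))\<^sup>2 \<le> expectation (\<lambda>\<omega>. (Zr y m s \<omega>)\<^sup>2)"
    by (rule sq_exp_le[OF Zr_int[OF oky] Zsq_int[OF oky]])
  also have "\<dots> \<le> expectation (\<lambda>\<omega>. V (Yr y m s \<omega>))" by (rule Zsq_le_V[OF oky])
  also have "\<dots> \<le> V y - 2 * \<sigma> * \<epsilon>0 * (\<Sum>l<s. ?Z0 - real l * dl) + ?S * c1" by (rule V_exp_bound[OF oky])
  also have "\<dots> \<le> ?Z0\<^sup>2 + \<alpha> * \<sigma> * R\<^sup>2 - 2*\<sigma>*\<epsilon>0*(?S*?Z0 - \<sigma>*bet*(?S*(?S-1)/2)) + ?S*(\<sigma>\<^sup>2*\<nu>g\<^sup>2 + 2*\<sigma>*\<kappa>f*R)"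
    using Vy unfolding sumeq c1_def by simp
  also have "\<dots> \<le> (?Z0 - ?S*\<sigma>*\<epsilon>0/2)\<^sup>2"
    by (rule drift_alg(1)[OF S1 sp eps ap R_nn kappa_nn(1) less_imp_le[OF bet_pos]]) (use Z in \<open>simp add: thet_def\<close>)
  finally have sq: "(expectation (Zr y m s))\<^sup>2 \<le> (?Z0 - ?S*\<sigma>*\<epsilon>0/2)\<^sup>2" .
  have nn: "0 \<le> ?Z0 - ?S*\<sigma>*\<epsilon>0/2"
    by (rule drift_alg(2)[OF S1 sp eps ap R_nn kappa_nn(1) less_imp_le[OF bet_pos]]) (use Z in \<open>simp add: thet_def\<close>)
  show ?thesis using power2_le_imp_le[OF sq nn] by simp
qed

end



context slpQ
begin

interpretation prob_space M by (rule P)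

lemma rr_pos: "s \<ge> 1 \<Longrightarrow> 0 < rr s"
  unfolding rr_def using eps sp bet_pos by simp

lemma rsd: "s \<ge> 1 \<Longrightarrow> rr s * (real s * dl) = \<epsilon>0 / (8 * bet)"
  unfolding rr_def dl_def using sp bet_pos by (simp add: field_simps power2_eq_square)

lemma rsz: "s \<ge> 1 \<Longrightarrow> rr s * (real s * \<sigma> * \<epsilon>0 / 2) = \<epsilon>0\<^sup>2 / (16 * bet\<^sup>2)"
  unfolding rr_def using sp bet_pos by (simp add: field_simps power2_eq_square)

lemma rho_alg: "1 - \<epsilon>0\<^sup>2 / (16 * bet\<^sup>2) + (\<epsilon>0 / (8 * bet))\<^sup>2 \<le> rho"
proof -
  have "1 - \<epsilon>0\<^sup>2 / (16 * bet\<^sup>2) + (\<epsilon>0 / (8 * bet))\<^sup>2 = rho - \<epsilon>0\<^sup>2 / (64 * bet\<^sup>2)"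
    unfolding rho_def using bet_pos by (simp add: field_simps power2_eq_square)
  moreover have "0 \<le> \<epsilon>0\<^sup>2 / (64 * bet\<^sup>2)" by simp
  ultimately show ?thesis by linarith
qed

lemma thet_ge: "s \<ge> 1 \<Longrightarrow> real s * \<sigma> * \<epsilon>0 / 2 \<le> thet s"
proof -
  assume s: "s \<ge> 1"
  have "0 \<le> 2*\<kappa>f*R/\<epsilon>0" using kappa_nn R_nn eps by simp
  moreover have "0 \<le> R\<^sup>2*\<alpha>/(\<epsilon>0*real s)" using ap eps s by simp
  moreover have "0 \<le> \<nu>g\<^sup>2/\<epsilon>0*\<sigma>" using sp eps by simp
  moreover have "0 \<le> bet*\<sigma>*(real s-1)" using bet_pos sp s by simp
  moreover have "thet s = 2*\<kappa>f*R/\<epsilon>0 + R\<^sup>2*\<alpha>/(\<epsilon>0*real s) + \<nu>g\<^sup>2/\<epsilon>0*\<sigma> + bet*\<sigma>*(real s-1) + real s*\<sigma>*\<epsilon>0/2"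
    unfolding thet_def by (simp add: field_simps)
  ultimately show ?thesis by linarith
qed

lemma thet_nn: "s \<ge> 1 \<Longrightarrow> 0 \<le> thet s"
proof -
  assume s: "s \<ge> 1"
  have "0 \<le> real s * \<sigma> * \<epsilon>0 / 2" using sp eps by simp
  then show ?thesis using thet_ge[OF s] by linarith
qed

lemma exp_state:
  assumes oky: "ok y" and s: "s \<ge> 1"
  shows "(\<integral>\<^sup>+\<omega>. ennreal (exp (rr s * Zr y m s \<omega>)) \<partial>M)
     \<le> ennreal (rho * exp (rr s * norm (snd y)) + exp (rr s * (thet s + real s * dl)))"
proof (cases "thet s \<le> norm (snd y)")
  case True
  let ?Z0 = "norm (snd y)" and ?r = "rr s" and ?S = "real s"
  define q where "q = (?r * (?S * dl))\<^sup>2"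
  define g where "g = (\<lambda>\<omega>. exp (?r * ?Z0) * (1 + ?r * (Zr y m s \<omega> - ?Z0) + q))"
  have r0: "0 < ?r" using rr_pos[OF s] .
  have rsd1: "?r * (?S * dl) \<le> 1"
  proof -
    have "\<epsilon>0 / (8 * bet) \<le> 1" using bet_ge eps bet_pos by (simp add: field_simps)
    then show ?thesis using rsd[OF s] by simp
  qed
  have AEg: "AE \<omega> in M. exp (?r * Zr y m s \<omega>) \<le> g \<omega> \<and> 0 \<le> g \<omega>"
    using AE_Z[OF oky, of m]
  proof eventually_elim
    case (elim \<omega>)
    define D where "D = Zr y m s \<omega> - ?Z0"
    have D: "\<bar>D\<bar> \<le> ?S * dl" using elim[rule_format, of s] unfolding D_def by simp
    have rD: "\<bar>?r * D\<bar> \<le> ?r * (?S * dl)" using D r0 by (simp add: abs_mult)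
    then have rD1: "\<bar>?r * D\<bar> \<le> 1" using rsd1 by linarith
    have sq: "(?r * D)\<^sup>2 \<le> q"
    proof -
      have "\<bar>?r * D\<bar>\<^sup>2 \<le> (?r * (?S * dl))\<^sup>2" by (rule power_mono[OF rD abs_ge_zero])
      then show ?thesis unfolding q_def by simp
    qed
    have "exp (?r * Zr y m s \<omega>) = exp (?r * ?Z0) * exp (?r * D)"
      unfolding D_def by (simp add: exp_add[symmetric] algebra_simps)
    also have "\<dots> \<le> exp (?r * ?Z0) * (1 + ?r * D + (?r * D)\<^sup>2)"
      by (intro mult_left_mono exp_quad rD1) simp
    also have "\<dots> \<le> g \<omega>" unfolding g_def D_def using sq by (intro mult_left_mono) (auto simp: D_def)
    finally have 1: "exp (?r * Zr y m s \<omega>) \<le> g \<omega>" .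
    have "0 \<le> q" unfolding q_def by simp
    moreover have "- 1 \<le> ?r * D" using rD1 by (simp add: abs_le_iff)
    ultimately have "0 \<le> 1 + ?r * D + q" by linarith
    then have "0 \<le> g \<omega>" unfolding g_def D_def by simp
    with 1 show ?case by simp
  qed
  have gint: "integrable M g"
  proof -
    have "integrable M (\<lambda>\<omega>. 1 + ?r * (Zr y m s \<omega> - ?Z0) + q)"
      using Zr_int[OF oky, of m s] by (intro Bochner_Integration.integrable_add Bochner_Integration.integrable_diff
          integrable_mult_right integrable_const) auto
    then show ?thesis unfolding g_def by (rule integrable_mult_right)
  qed
  have "(\<integral>\<^sup>+\<omega>. ennreal (exp (?r * Zr y m s \<omega>)) \<partial>M) \<le> (\<integral>\<^sup>+\<omega>. ennreal (g \<omega>) \<partial>M)"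
    by (rule nn_integral_mono_AE) (use AEg in \<open>auto elim!: eventually_mono intro: ennreal_leI\<close>)
  also have "\<dots> = ennreal (expectation g)"
    by (rule nn_integral_eq_integral[OF gint]) (use AEg in \<open>auto elim!: eventually_mono\<close>)
  also have "expectation g = exp (?r * ?Z0) * (1 + ?r * (expectation (Zr y m s) - ?Z0) + q)"
    unfolding g_def using Zr_int[OF oky, of m s] by (simp add: prob_space algebra_simps)
  also have "\<dots> \<le> exp (?r * ?Z0) * rho"
  proof (rule mult_left_mono)
    have "?r * (expectation (Zr y m s) - ?Z0) \<le> ?r * (- (?S * \<sigma> * \<epsilon>0 / 2))"
      using drift[OF oky s True, of m] r0 by (intro mult_left_mono) auto
    also have "\<dots> = - (\<epsilon>0\<^sup>2 / (16 * bet\<^sup>2))" using rsz[OF s] by simp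
    finally have "1 + ?r * (expectation (Zr y m s) - ?Z0) + q \<le> 1 - \<epsilon>0\<^sup>2 / (16 * bet\<^sup>2) + (\<epsilon>0 / (8 * bet))\<^sup>2"
      unfolding q_def rsd[OF s] by simp
    then show "1 + ?r * (expectation (Zr y m s) - ?Z0) + q \<le> rho" using rho_alg by linarith
  qed simp
  also have "\<dots> \<le> rho * exp (?r * ?Z0) + exp (?r * (thet s + ?S * dl))" by simp
  finally show ?thesis by (simp add: ennreal_leI)
next
  case False
  let ?Z0 = "norm (snd y)" and ?r = "rr s" and ?S = "real s"
  have r0: "0 < ?r" using rr_pos[OF s] .
  have "(\<integral>\<^sup>+\<omega>. ennreal (exp (?r * Zr y m s \<omega>)) \<partial>M) \<le> (\<integral>\<^sup>+\<omega>. ennreal (exp (?r * (thet s + ?S * dl))) \<partial>M)"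
  proof (rule nn_integral_mono_AE)
    show "AE \<omega> in M. ennreal (exp (?r * Zr y m s \<omega>)) \<le> ennreal (exp (?r * (thet s + ?S * dl)))"
      using AE_Z[OF oky, of m]
    proof eventually_elim
      case (elim \<omega>)
      have "Zr y m s \<omega> \<le> thet s + ?S * dl" using elim[rule_format, of s] False by linarith
      then have "?r * Zr y m s \<omega> \<le> ?r * (thet s + ?S * dl)" using r0 by (intro mult_left_mono) auto
      then show ?case by (intro ennreal_leI) simp
    qed
  qed
  also have "\<dots> = ennreal (exp (?r * (thet s + ?S * dl)))" by (simp add: emeasure_space_1)
  also have "\<dots> \<le> ennreal (rho * exp (?r * ?Z0) + exp (?r * (thet s + ?S * dl)))"
    using rho_props by (intro ennreal_leI) simp
  finally show ?thesis .
qed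

end



context slpQ
begin

interpretation prob_space M by (rule P)

definition Kb :: "nat \<Rightarrow> real" where
  "Kb s = exp (rr s * (thet s + real s * dl)) / (1 - rho)"

lemma Kb_props: "exp (rr s * (thet s + real s * dl)) \<le> Kb s" "rho * Kb s + exp (rr s * (thet s + real s * dl)) = Kb s"
proof -
  have r1: "0 < 1 - rho" "1 - rho \<le> 1" using rho_props by auto
  show "exp (rr s * (thet s + real s * dl)) \<le> Kb s"
    unfolding Kb_def using r1 by (simp add: le_divide_eq)
  show "rho * Kb s + exp (rr s * (thet s + real s * dl)) = Kb s"
    unfolding Kb_def using r1 by (simp add: field_simps)
qed

lemma Zr_meas_e: "(\<lambda>\<omega>. ennreal (exp (c * Zr y m j \<omega>))) \<in> borel_measurable M"
proof -
  have [measurable]: "Zr y m j \<in> borel_measurable M" by (rule Zr_meas)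
  show ?thesis by measurable
qed

lemma rec_bound:
  assumes s: "s \<ge> 1"
  shows "(\<integral>\<^sup>+\<omega>. ennreal (exp (rr s * Zr (x0, 0) 0 k \<omega>)) \<partial>M) \<le> ennreal (Kb s)"
proof (induction k rule: less_induct)
  case (less k)
  let ?r = "rr s" and ?c = "exp (rr s * (thet s + real s * dl))"
  have r0: "0 < ?r" using rr_pos[OF s] .
  show ?case
  proof (cases "k < s")
    case True
    have "(\<integral>\<^sup>+\<omega>. ennreal (exp (?r * Zr (x0, 0) 0 k \<omega>)) \<partial>M) \<le> (\<integral>\<^sup>+\<omega>. ennreal (Kb s) \<partial>M)"
    proof (rule nn_integral_mono_AE)
      show "AE \<omega> in M. ennreal (exp (?r * Zr (x0, 0) 0 k \<omega>)) \<le> ennreal (Kb s)"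
        using AE_Z[OF ok0, of 0]
      proof eventually_elim
        case (elim \<omega>)
        have "Zr (x0, 0) 0 k \<omega> \<le> real k * dl" using elim[rule_format, of k] by simp
        also have "\<dots> \<le> real s * dl" using True unfolding dl_def using sp bet_pos by (intro mult_right_mono) auto
        also have "\<dots> \<le> thet s + real s * dl" using thet_nn[OF s] by simp
        finally have "?r * Zr (x0, 0) 0 k \<omega> \<le> ?r * (thet s + real s * dl)" using r0 by (intro mult_left_mono) auto
        then have "exp (?r * Zr (x0, 0) 0 k \<omega>) \<le> ?c" by simp
        also have "\<dots> \<le> Kb s" by (rule Kb_props(1))
        finally show ?case by (intro ennreal_leI)
      qed
    qed
    also have "\<dots> = ennreal (Kb s)" by (simp add: emeasure_space_1)
    finally show ?thesis .
  next
    case False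
    then obtain k' where k: "k = k' + s" by (metis add.commute le_Suc_ex not_less)
    have kk: "k' < k" using k s by simp
    define h :: "'n \<times> (real^'p) \<Rightarrow> ennreal" where "h = (\<lambda>y. ennreal (exp (?r * norm (snd y))))"
    define Bf :: "'n \<times> (real^'p) \<Rightarrow> ennreal" where "Bf = (\<lambda>y. ennreal (rho * exp (?r * norm (snd y)) + ?c))"
    have hm: "h \<in> borel_measurable borel"
    proof -
      have "(\<lambda>y::'n \<times> (real^'p). exp (?r * norm (snd y))) \<in> borel_measurable borel"
        by (intro borel_measurable_continuous_onI continuous_intros)
      from measurable_compose[OF this measurable_ennreal] show ?thesis unfolding h_def .
    qed
    have Bm: "Bf \<in> borel_measurable borel"
    proof -
      have "(\<lambda>y::'n \<times> (real^'p). rho * exp (?r * norm (snd y)) + ?c) \<in> borel_measurable borel"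
        by (intro borel_measurable_continuous_onI continuous_intros)
      from measurable_compose[OF this measurable_ennreal] show ?thesis unfolding Bf_def .
    qed
    have "(\<integral>\<^sup>+\<omega>. ennreal (exp (?r * Zr (x0, 0) 0 k \<omega>)) \<partial>M) = (\<integral>\<^sup>+\<omega>. h (run step (x0, 0) 0 (k' + s) (X \<omega>)) \<partial>M)"
      unfolding h_def Zr_def Yr_def k ..
    also have "\<dots> \<le> (\<integral>\<^sup>+\<omega>. Bf (run step (x0, 0) 0 k' (X \<omega>)) \<partial>M)"
    proof (rule markov[OF hm Bm])
      fix y :: "'n \<times> (real^'p)" assume oky: "ok y"
      have "(\<integral>\<^sup>+\<omega>. h (run step y k' s (X \<omega>)) \<partial>M) = (\<integral>\<^sup>+\<omega>. ennreal (exp (?r * Zr y k' s \<omega>)) \<partial>M)"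
        unfolding h_def Zr_def Yr_def ..
      also have "\<dots> \<le> Bf y" unfolding Bf_def by (rule exp_state[OF oky s])
      finally show "(\<integral>\<^sup>+\<omega>. h (run step y k' s (X \<omega>)) \<partial>M) \<le> Bf y" .
    qed
    also have "\<dots> = (\<integral>\<^sup>+\<omega>. ennreal rho * ennreal (exp (?r * Zr (x0, 0) 0 k' \<omega>)) + ennreal ?c \<partial>M)"
      unfolding Bf_def Zr_def Yr_def using rho_props
      by (intro nn_integral_cong) (simp add: ennreal_plus ennreal_mult)
    also have "\<dots> = ennreal rho * (\<integral>\<^sup>+\<omega>. ennreal (exp (?r * Zr (x0, 0) 0 k' \<omega>)) \<partial>M) + ennreal ?c"
    proof -
      have [measurable]: "(\<lambda>\<omega>. ennreal (exp (?r * Zr (x0, 0) 0 k' \<omega>))) \<in> borel_measurable M" by (rule Zr_meas_e)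
      have m1: "(\<lambda>\<omega>. ennreal rho * ennreal (exp (?r * Zr (x0, 0) 0 k' \<omega>))) \<in> borel_measurable M" by measurable
      have m2: "(\<lambda>\<omega>. ennreal ?c) \<in> borel_measurable M" by simp
      show ?thesis
        by (simp only: nn_integral_add[OF m1 m2] nn_integral_cmult[OF Zr_meas_e] nn_integral_const emeasure_space_1 mult_1_right)
    qed
    also have "\<dots> \<le> ennreal rho * ennreal (Kb s) + ennreal ?c"
      by (intro add_mono mult_left_mono less.IH[OF kk]) auto
    also have "\<dots> = ennreal (rho * Kb s + ?c)"
    proof -
      have Kb0: "0 \<le> Kb s" using Kb_props(1)[of s] exp_ge_zero order_trans by blast
      have "ennreal (rho * Kb s + ?c) = ennreal (rho * Kb s) + ennreal ?c"
        using rho_props Kb0 by (intro ennreal_plus) auto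
      also have "ennreal (rho * Kb s) = ennreal rho * ennreal (Kb s)"
        using rho_props Kb0 by (intro ennreal_mult) auto
      finally show ?thesis by simp
    qed
    also have "\<dots> = ennreal (Kb s)" using Kb_props(2) by simp
    finally show ?thesis .
  qed
qed

lemma final_bounds:
  assumes s: "s \<ge> 1"
  shows "expectation (Zr (x0, 0) 0 k) \<le> thet s + real s * dl + ln (1 / (1 - rho)) / rr s"
    and "0 < \<mu> \<Longrightarrow> \<mu> < 1 \<Longrightarrow> measure M {\<omega> \<in> space M. thet s + real s * dl + (ln (1 / (1 - rho)) + ln (1 / \<mu>)) / rr s \<le> Zr (x0, 0) 0 k \<omega>} \<le> \<mu>"
proof -
  let ?r = "rr s" and ?Z = "Zr (x0, 0) 0 k" and ?c = "thet s + real s * dl"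
  have r0: "0 < ?r" using rr_pos[OF s] .
  have r1: "0 < 1 - rho" using rho_props by auto
  have [measurable]: "?Z \<in> borel_measurable M" by (rule Zr_meas)
  have eint: "integrable M (\<lambda>\<omega>. exp (?r * ?Z \<omega>))"
  proof (rule integrable_const_bound[where B="exp (?r * (real k * dl))"])
    show "AE x in M. norm (exp (?r * ?Z x)) \<le> exp (?r * (real k * dl))"
      using AE_Z[OF ok0, of 0]
    proof eventually_elim
      case (elim x)
      have "?Z x \<le> real k * dl" using elim[rule_format, of k] by simp
      then have "?r * ?Z x \<le> ?r * (real k * dl)" using r0 by (intro mult_left_mono) auto
      then show ?case by simp
    qed
  qed measurable
  have "ennreal (expectation (\<lambda>\<omega>. exp (?r * ?Z \<omega>))) = (\<integral>\<^sup>+\<omega>. ennreal (exp (?r * ?Z \<omega>)) \<partial>M)"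
    by (rule nn_integral_eq_integral[OF eint, symmetric]) simp
  also have "\<dots> \<le> ennreal (Kb s)" by (rule rec_bound[OF s])
  finally have EK: "expectation (\<lambda>\<omega>. exp (?r * ?Z \<omega>)) \<le> Kb s"
    using Kb_props(1)[of s] by (subst (asm) ennreal_le_iff) (auto intro: order_trans[OF exp_ge_zero])
  have Kpos: "0 < Kb s" unfolding Kb_def using r1 by simp
  have lnK: "ln (Kb s) = ?r * ?c + ln (1 / (1 - rho))"
    unfolding Kb_def using r1 by (simp add: ln_div)
  show "expectation ?Z \<le> ?c + ln (1 / (1 - rho)) / ?r"
  proof -
    define m where "m = expectation ?Z"
    have "expectation (\<lambda>\<omega>. exp (?r * m) * (1 + ?r * (?Z \<omega> - m))) \<le> expectation (\<lambda>\<omega>. exp (?r * ?Z \<omega>))"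
    proof (rule integral_mono)
      show "integrable M (\<lambda>\<omega>. exp (?r * m) * (1 + ?r * (?Z \<omega> - m)))"
        using Zr_int[OF ok0, of 0 k]
        by (intro integrable_mult_right Bochner_Integration.integrable_add Bochner_Integration.integrable_diff integrable_const) auto
      show "integrable M (\<lambda>\<omega>. exp (?r * ?Z \<omega>))" by (rule eint)
      fix \<omega>
      have "exp (?r * m) * (1 + ?r * (?Z \<omega> - m)) \<le> exp (?r * m) * exp (?r * (?Z \<omega> - m))"
        by (intro mult_left_mono) auto
      also have "\<dots> = exp (?r * ?Z \<omega>)" by (simp add: exp_add[symmetric] algebra_simps)
      finally show "exp (?r * m) * (1 + ?r * (?Z \<omega> - m)) \<le> exp (?r * ?Z \<omega>)" .
    qed
    moreover have "expectation (\<lambda>\<omega>. exp (?r * m) * (1 + ?r * (?Z \<omega> - m))) = exp (?r * m)"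
      using Zr_int[OF ok0, of 0 k] unfolding m_def by (simp add: prob_space algebra_simps)
    ultimately have "exp (?r * m) \<le> Kb s" using EK by linarith
    then have "?r * m \<le> ln (Kb s)" using Kpos by (metis exp_le_cancel_iff exp_ln)
    then have "?r * m \<le> ?r * (?c + ln (1 / (1 - rho)) / ?r)" using r0 unfolding lnK by (simp add: algebra_simps)
    then show ?thesis unfolding m_def using r0 by simp
  qed
  assume mu: "0 < \<mu>" "\<mu> < 1"
  define ph where "ph = ?c + (ln (1 / (1 - rho)) + ln (1 / \<mu>)) / ?r"
  define A where "A = {\<omega> \<in> space M. ph \<le> ?Z \<omega>}"
  have Am: "A \<in> sets M" unfolding A_def by measurable
  have "measure M A = expectation (indicator A)" using Am by simp
  also have "\<dots> \<le> expectation (\<lambda>\<omega>. exp (- (?r * ph)) * exp (?r * ?Z \<omega>))"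
  proof (rule integral_mono)
    show "integrable M (indicator A :: 'w \<Rightarrow> real)" using Am by (intro integrable_real_indicator) (auto simp: emeasure_eq_measure)
    show "integrable M (\<lambda>\<omega>. exp (- (?r * ph)) * exp (?r * ?Z \<omega>))" using eint by simp
    fix \<omega>
    show "indicator A \<omega> \<le> exp (- (?r * ph)) * exp (?r * ?Z \<omega>)"
    proof (cases "\<omega> \<in> A")
      case True
      then have "ph \<le> ?Z \<omega>" unfolding A_def by simp
      then have "0 \<le> ?r * (?Z \<omega> - ph)" using r0 by simp
      then have "1 \<le> exp (?r * (?Z \<omega> - ph))" by simp
      also have "\<dots> = exp (- (?r * ph)) * exp (?r * ?Z \<omega>)" by (simp add: exp_add[symmetric] algebra_simps)
      finally show ?thesis using True by simp
    qed simp
  qed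
  also have "\<dots> = exp (- (?r * ph)) * expectation (\<lambda>\<omega>. exp (?r * ?Z \<omega>))" by simp
  also have "\<dots> \<le> exp (- (?r * ph)) * Kb s" using EK by (intro mult_left_mono) auto
  also have "\<dots> = \<mu>"
  proof -
    have rph: "?r * ph = ?r * ?c + ln (1 / (1 - rho)) + ln (1 / \<mu>)" unfolding ph_def using r0 by (simp add: field_simps)
    have e1: "exp (- ln (1 / (1 - rho))) = 1 - rho" using r1 by (simp add: ln_div)
    have e2: "exp (- ln (1 / \<mu>)) = \<mu>" using mu by (simp add: ln_div)
    have "exp (- (?r * ph)) = exp (- (?r * ?c)) * exp (- ln (1 / (1 - rho))) * exp (- ln (1 / \<mu>))"
      by (simp only: rph minus_add_distrib exp_add)
    also have "\<dots> = exp (- (?r * ?c)) * (1 - rho) * \<mu>" by (simp only: e1 e2)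
    finally have E: "exp (- (?r * ph)) = exp (- (?r * ?c)) * (1 - rho) * \<mu>" .
    have "exp (- (?r * ?c)) * exp (?r * ?c) = 1" by (simp add: exp_minus)
    then show ?thesis unfolding E Kb_def using r1 by (simp add: field_simps)
  qed
  finally show "measure M {\<omega> \<in> space M. thet s + real s * dl + (ln (1 / (1 - rho)) + ln (1 / \<mu>)) / rr s \<le> Zr (x0, 0) 0 k \<omega>} \<le> \<mu>"
    unfolding A_def ph_def .
qed

end



context slp
begin

lemma run_slpmm: "slpmm C F G v0 v \<sigma> \<alpha> x0 smp k = run step (x0, 0) 0 k smp"
  by (induction k) (simp_all only: slpmm_Suc run.simps slpmm.simps(1) add_0)

end

context slpQ
begin

lemma psi_eq:
  assumes s: "s \<ge> 1"
  shows "psi_bd \<nu>g \<kappa>f \<kappa>g R \<epsilon>0 CARD('p) \<sigma> \<alpha> (real s) = thet s + real s * dl + ln (1 / (1 - rho)) / rr s"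
proof -
  have b: "beta0 \<nu>g \<kappa>g R CARD('p) = bet" unfolding beta0_def bet_def ..
  have inv: "1 / (1 - rho) = 32 * bet\<^sup>2 / \<epsilon>0\<^sup>2" unfolding rho_def using eps bet_pos by (simp add: field_simps)
  define L where "L = ln (32 * bet\<^sup>2 / \<epsilon>0\<^sup>2)"
  have T: "ln (1 / (1 - rho)) / rr s = L * (8 * real s * \<sigma> * bet\<^sup>2 / \<epsilon>0)"
    unfolding inv L_def rr_def using s sp eps bet_pos by (simp add: field_simps)
  show ?thesis
    unfolding psi_bd_def Let_def b T thet_def dl_def L_def[symmetric] using s eps by (simp add: field_simps power2_eq_square)
qed

lemma phi_eq:
  assumes s: "s \<ge> 1"
  shows "phi_bd \<nu>g \<kappa>f \<kappa>g R \<epsilon>0 CARD('p) \<sigma> \<alpha> (real s) \<mu> = thet s + real s * dl + (ln (1 / (1 - rho)) + ln (1 / \<mu>)) / rr s"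
proof -
  have b: "beta0 \<nu>g \<kappa>g R CARD('p) = bet" unfolding beta0_def bet_def ..
  have "ln (1 / \<mu>) / rr s = (8 * bet\<^sup>2 / \<epsilon>0) * ln (1 / \<mu>) * \<sigma> * real s"
    unfolding rr_def using s sp eps bet_pos by (simp add: field_simps)
  then show ?thesis unfolding phi_bd_def psi_eq[OF s] b by (simp add: add_divide_distrib)
qed

end

theorem lemma6:
  fixes M :: "'w measure"
    and Xi :: "nat \<Rightarrow> 'w \<Rightarrow> 'q::euclidean_space"
    and Xset :: "'q set"
    and C :: "'n::euclidean_space set"
    and F :: "'n \<Rightarrow> 'q \<Rightarrow> real"
    and G :: "'n \<Rightarrow> 'q \<Rightarrow> real^'p"
    and v0 :: "'n \<Rightarrow> 'q \<Rightarrow> 'n"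
    and v :: "'p \<Rightarrow> 'n \<Rightarrow> 'q \<Rightarrow> 'n"
    and R \<nu>g \<kappa>f \<kappa>g \<epsilon>0 \<sigma> \<alpha> :: real
    and x0 xhat :: 'n
    and s :: nat
  assumes P: "prob_space M"
    and Xi_rv: "\<And>k. Xi k \<in> borel_measurable M"
    and Xi_indep: "prob_space.indep_vars M (\<lambda>_. borel) Xi UNIV"
    and Xi_ident: "\<And>k. distr M borel (Xi k) = distr M borel (Xi 0)"
    and Xi_supp: "\<And>k. AE \<omega> in M. Xi k \<omega> \<in> Xset"
    and C_cpt: "compact C" and C_cvx: "convex C" and C_ne: "C \<noteq> {}"
    and F_cvx: "\<And>z. z \<in> Xset \<Longrightarrow> convex_on C (\<lambda>x. F x z) \<and> continuous_on C (\<lambda>x. F x z)"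
    and G_cvx: "\<And>z i. z \<in> Xset \<Longrightarrow> convex_on C (\<lambda>x. G x z $ i) \<and> continuous_on C (\<lambda>x. G x z $ i)"
    and F_meas: "(\<lambda>y. F (fst y) (snd y)) \<in> borel_measurable borel"
    and G_meas: "(\<lambda>y. G (fst y) (snd y)) \<in> borel_measurable borel"
    and v0_meas: "(\<lambda>y. v0 (fst y) (snd y)) \<in> borel_measurable borel"
    and v_meas: "\<And>i. (\<lambda>y. v i (fst y) (snd y)) \<in> borel_measurable borel"
    and f_fin: "\<And>x. x \<in> C \<Longrightarrow> integrable M (\<lambda>\<omega>. F x (Xi 0 \<omega>))"
    and g_fin: "\<And>x i. x \<in> C \<Longrightarrow> integrable M (\<lambda>\<omega>. G x (Xi 0 \<omega>) $ i)"
    and v0_sub: "\<And>x z. x \<in> C \<Longrightarrow> z \<in> Xset \<Longrightarrow> subgrad_on C (\<lambda>y. F y z) x (v0 x z)"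
    and v_sub: "\<And>x z i. x \<in> C \<Longrightarrow> z \<in> Xset \<Longrightarrow> subgrad_on C (\<lambda>y. G y z $ i) x (v i x z)"
    and A1: "\<And>x' x''. x' \<in> C \<Longrightarrow> x'' \<in> C \<Longrightarrow> norm (x' - x'') \<le> R"
    and A2: "\<And>x z. x \<in> C \<Longrightarrow> z \<in> Xset \<Longrightarrow> norm (G x z) \<le> \<nu>g"
    and A3: "\<And>x z i. x \<in> C \<Longrightarrow> z \<in> Xset \<Longrightarrow> norm (v0 x z) \<le> \<kappa>f \<and> norm (v i x z) \<le> \<kappa>g"
    and A4: "\<epsilon>0 > 0" "xhat \<in> C" "\<And>i. prob_space.expectation M (\<lambda>\<omega>. G xhat (Xi 0 \<omega>) $ i) \<le> - \<epsilon>0"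
    and \<sigma>_pos: "\<sigma> > 0" and \<alpha>_pos: "\<alpha> > 0"
    and x0_C: "x0 \<in> C"
    and s_pos: "s > 0"
  shows "\<forall>k. prob_space.expectation M
               (\<lambda>\<omega>. norm (snd (slpmm C F G v0 v \<sigma> \<alpha> x0 (\<lambda>j. Xi j \<omega>) k)))
             \<le> psi_bd \<nu>g \<kappa>f \<kappa>g R \<epsilon>0 CARD('p) \<sigma> \<alpha> (real s)
         \<and> (\<forall>\<mu>. 0 < \<mu> \<and> \<mu> < 1 \<longrightarrow>
              measure M {\<omega> \<in> space M.
                 norm (snd (slpmm C F G v0 v \<sigma> \<alpha> x0 (\<lambda>j. Xi j \<omega>) k))
                   \<ge> phi_bd \<nu>g \<kappa>f \<kappa>g R \<epsilon>0 CARD('p) \<sigma> \<alpha> (real s) \<mu>} \<le> \<mu>)"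
proof -
  have "slpQ C \<sigma> \<alpha> G v0 v Xset R \<nu>g \<kappa>f \<kappa>g xhat M Xi x0 \<epsilon>0"
    by (intro slpQ.intro slpP.intro slpm.intro slp.intro amin_loc.intro slpQ_axioms.intro slpP_axioms.intro
        slpm_axioms.intro slp_axioms.intro) (use assms in auto)
  then interpret Q: slpQ C \<sigma> \<alpha> F G v0 v Xset R \<nu>g \<kappa>f \<kappa>g xhat M Xi x0 \<epsilon>0 .
  have s1: "s \<ge> 1" using s_pos by simp
  show ?thesis
  proof (intro allI conjI impI)
    fix k
    have eqf: "(\<lambda>\<omega>. norm (snd (slpmm C F G v0 v \<sigma> \<alpha> x0 (\<lambda>j. Xi j \<omega>) k))) = Q.Zr (x0, 0) 0 k"
      by (rule ext) (simp add: Q.run_slpmm Q.Zr_def Q.Yr_def)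
    show "prob_space.expectation M (\<lambda>\<omega>. norm (snd (slpmm C F G v0 v \<sigma> \<alpha> x0 (\<lambda>j. Xi j \<omega>) k)))
             \<le> psi_bd \<nu>g \<kappa>f \<kappa>g R \<epsilon>0 CARD('p) \<sigma> \<alpha> (real s)"
      unfolding eqf Q.psi_eq[OF s1] by (rule Q.final_bounds(1)[OF s1])
    fix \<mu> :: real assume mu: "0 < \<mu> \<and> \<mu> < 1"
    have "{\<omega> \<in> space M. norm (snd (slpmm C F G v0 v \<sigma> \<alpha> x0 (\<lambda>j. Xi j \<omega>) k))
                   \<ge> phi_bd \<nu>g \<kappa>f \<kappa>g R \<epsilon>0 CARD('p) \<sigma> \<alpha> (real s) \<mu>}
        = {\<omega> \<in> space M. Q.thet s + real s * Q.dl + (ln (1 / (1 - Q.rho)) + ln (1 / \<mu>)) / Q.rr s \<le> Q.Zr (x0, 0) 0 k \<omega>}"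
    proof -
      have eqp: "\<And>\<omega>. norm (snd (slpmm C F G v0 v \<sigma> \<alpha> x0 (\<lambda>j. Xi j \<omega>) k)) = Q.Zr (x0, 0) 0 k \<omega>"
        by (simp add: Q.run_slpmm Q.Zr_def Q.Yr_def)
      show ?thesis unfolding Q.phi_eq[OF s1] by (simp add: eqp)
    qed
    then show "measure M {\<omega> \<in> space M.
                 norm (snd (slpmm C F G v0 v \<sigma> \<alpha> x0 (\<lambda>j. Xi j \<omega>) k))
                   \<ge> phi_bd \<nu>g \<kappa>f \<kappa>g R \<epsilon>0 CARD('p) \<sigma> \<alpha> (real s) \<mu>} \<le> \<mu>"
      using Q.final_bounds(2)[OF s1, of \<mu> k] mu by simp
  qed
qed


end
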